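(* If $\Gamma=(S,A)$ is a connected skew-symmetric graph which has the Kahan-Poisson property, then there exists $\gamma\in\mathbb F^*$ such that every non-zero entry $a_{i,j}$ of $A$ belongs to $\{\gamma,-\gamma\}$.
   Context: $\mathbb F\in\{\mathbb R,\mathbb C\}$. A skew-symmetric graph is $\Gamma=(S,A)$, $A=(a_{i,j})$ skew-symmetric over $\mathbb F$, with an arc between $i$ and $j$ iff $a_{i,j}\ne0$; connected means the underlying undirected graph is connected. Its Poisson bracket on $\mathbb F(x)$ is $\{x_i,x_j\}=a_{i,j}x_ix_j$; its Kahan morphism is $K(x_i)=\tilde x_i$ with $\tilde x_i$ the unique solution of $\tilde x_i-x_i=\tilde x_i\sum_ja_{i,j}x_j+x_i\sum_ja_{i,j}\tilde x_j$; $\Gamma$ has the Kahan-Poisson property if $\{\tilde x_i,\tilde x_j\}=a_{i,j}\tilde x_i\tilde x_j$ for all $i,j$. *)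

theory Defs
  imports "HOL-Analysis.Analysis"
begin

text \<open>Vertices: a finite type 'n (the set S = UNIV). Weights A :: 'n => 'n => 'a.\<close>

definition skew_symmetric :: "('n \<Rightarrow> 'n \<Rightarrow> 'a::ab_group_add) \<Rightarrow> bool" where
  "skew_symmetric A \<longleftrightarrow> (\<forall>i j. A i j = - A j i)"

definition arcs :: "('n \<Rightarrow> 'n \<Rightarrow> 'a::zero) \<Rightarrow> ('n \<times> 'n) set" where
  "arcs A = {(i, j). A i j \<noteq> 0}"

definition connected_graph :: "('n \<Rightarrow> 'n \<Rightarrow> 'a::zero) \<Rightarrow> bool" where
  "connected_graph A \<longleftrightarrow> (\<forall>i j. (i, j) \<in> (arcs A \<union> (arcs A)\<inverse>)\<^sup>*)"

text \<open>The defining linear equations of the Kahan morphism at the point x, with unknown y = x tilde.\<close>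
definition kahan_eqs :: "('n::finite \<Rightarrow> 'n \<Rightarrow> 'a::field) \<Rightarrow> ('n \<Rightarrow> 'a) \<Rightarrow> ('n \<Rightarrow> 'a) \<Rightarrow> bool" where
  "kahan_eqs A x y \<longleftrightarrow>
     (\<forall>i. y i - x i = y i * (\<Sum>j\<in>UNIV. A i j * x j) + x i * (\<Sum>j\<in>UNIV. A i j * y j))"

text \<open>Points where the Kahan system has a unique solution (the domain of the rational map K).\<close>
definition kahan_defined :: "('n::finite \<Rightarrow> 'n \<Rightarrow> 'a::field) \<Rightarrow> ('n \<Rightarrow> 'a) \<Rightarrow> bool" where
  "kahan_defined A x \<longleftrightarrow> (\<exists>!y. kahan_eqs A x y)"

definition kahan :: "('n::finite \<Rightarrow> 'n \<Rightarrow> 'a::field) \<Rightarrow> ('n \<Rightarrow> 'a) \<Rightarrow> ('n \<Rightarrow> 'a)" where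
  "kahan A x = (THE y. kahan_eqs A x y)"

definition partial_deriv :: "(('n \<Rightarrow> 'a) \<Rightarrow> 'a::real_normed_field) \<Rightarrow> 'n \<Rightarrow> ('n \<Rightarrow> 'a) \<Rightarrow> 'a" where
  "partial_deriv f k x = deriv (\<lambda>t. f (x(k := t))) (x k)"

definition poisson_bracket :: "('n::finite \<Rightarrow> 'n \<Rightarrow> 'a::real_normed_field) \<Rightarrow>
    (('n \<Rightarrow> 'a) \<Rightarrow> 'a) \<Rightarrow> (('n \<Rightarrow> 'a) \<Rightarrow> 'a) \<Rightarrow> ('n \<Rightarrow> 'a) \<Rightarrow> 'a" where
  "poisson_bracket A f g x =
     (\<Sum>k\<in>UNIV. \<Sum>l\<in>UNIV. A k l * x k * x l * partial_deriv f k x * partial_deriv g l x)"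

text \<open>Kahan-Poisson property: the identity of rational functions, checked pointwise on the
  (nonempty, Zariski-open) domain of definition of the Kahan map.\<close>
definition kahan_poisson :: "('n::finite \<Rightarrow> 'n \<Rightarrow> 'a::real_normed_field) \<Rightarrow> bool" where
  "kahan_poisson A \<longleftrightarrow>
     (\<forall>x. kahan_defined A x \<longrightarrow>
        (\<forall>i j. poisson_bracket A (\<lambda>z. kahan A z i) (\<lambda>z. kahan A z j) x
               = A i j * kahan A x i * kahan A x j))"

end

theory Submission imports Defs begin
definition KD :: "'a::comm_ring_1 \<Rightarrow> 'a \<Rightarrow> 'a \<Rightarrow> 'a \<Rightarrow> 'a \<Rightarrow> 'a \<Rightarrow> 'a" where
  "KD a b c x1 x2 x3 = (1 - c * x3 + c * x2 - b * x3 + b * x1 + b * c * x3^2 - b * c * x2 * x3 - b * c * x1 * x3 - a * x2 + a * x1 + a * c * x2 * x3 - a * c * x2^2 + a * c * x1 * x2 - a * b * x1 * x3 - a * b * x1 * x2 + a * b * x1^2)"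

definition KN1 :: "'a::comm_ring_1 \<Rightarrow> 'a \<Rightarrow> 'a \<Rightarrow> 'a \<Rightarrow> 'a \<Rightarrow> 'a \<Rightarrow> 'a" where
  "KN1 a b c x1 x2 x3 = (x1 - c * x1 * x3 + c * x1 * x2 + b * x1 * x3 + b * x1^2 - b * c * x1 * x3^2 - b * c * x1 * x2 * x3 - b * c * x1^2 * x3 + a * x1 * x2 + a * x1^2 + a * c * x1 * x2 * x3 + a * c * x1 * x2^2 + a * c * x1^2 * x2 + a * b * x1^2 * x3 + a * b * x1^2 * x2 + a * b * x1^3)"

definition KN2 :: "'a::comm_ring_1 \<Rightarrow> 'a \<Rightarrow> 'a \<Rightarrow> 'a \<Rightarrow> 'a \<Rightarrow> 'a \<Rightarrow> 'a" where
  "KN2 a b c x1 x2 x3 = (x2 + c * x2 * x3 + c * x2^2 - b * x2 * x3 + b * x1 * x2 - b * c * x2 * x3^2 - b * c * x2^2 * x3 - b * c * x1 * x2 * x3 - a * x2^2 - a * x1 * x2 - a * c * x2^2 * x3 - a * c * x2^3 - a * c * x1 * x2^2 - a * b * x1 * x2 * x3 - a * b * x1 * x2^2 - a * b * x1^2 * x2)"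

definition KN3 :: "'a::comm_ring_1 \<Rightarrow> 'a \<Rightarrow> 'a \<Rightarrow> 'a \<Rightarrow> 'a \<Rightarrow> 'a \<Rightarrow> 'a" where
  "KN3 a b c x1 x2 x3 = (x3 - c * x3^2 - c * x2 * x3 - b * x3^2 - b * x1 * x3 + b * c * x3^3 + b * c * x2 * x3^2 + b * c * x1 * x3^2 - a * x2 * x3 + a * x1 * x3 + a * c * x2 * x3^2 + a * c * x2^2 * x3 + a * c * x1 * x2 * x3 - a * b * x1 * x3^2 - a * b * x1 * x2 * x3 - a * b * x1^2 * x3)"

definition KdD1 :: "'a::comm_ring_1 \<Rightarrow> 'a \<Rightarrow> 'a \<Rightarrow> 'a \<Rightarrow> 'a \<Rightarrow> 'a \<Rightarrow> 'a" where
  "KdD1 a b c x1 x2 x3 = (b - b * c * x3 + a + a * c * x2 - a * b * x3 - a * b * x2 + 2 * a * b * x1)"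

definition KdD2 :: "'a::comm_ring_1 \<Rightarrow> 'a \<Rightarrow> 'a \<Rightarrow> 'a \<Rightarrow> 'a \<Rightarrow> 'a \<Rightarrow> 'a" where
  "KdD2 a b c x1 x2 x3 = (c - b * c * x3 - a + a * c * x3 - 2 * a * c * x2 + a * c * x1 - a * b * x1)"

definition KdD3 :: "'a::comm_ring_1 \<Rightarrow> 'a \<Rightarrow> 'a \<Rightarrow> 'a \<Rightarrow> 'a \<Rightarrow> 'a \<Rightarrow> 'a" where
  "KdD3 a b c x1 x2 x3 = (- c - b + 2 * b * c * x3 - b * c * x2 - b * c * x1 + a * c * x2 - a * b * x1)"

definition KdN11 :: "'a::comm_ring_1 \<Rightarrow> 'a \<Rightarrow> 'a \<Rightarrow> 'a \<Rightarrow> 'a \<Rightarrow> 'a \<Rightarrow> 'a" where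
  "KdN11 a b c x1 x2 x3 = (1 - c * x3 + c * x2 + b * x3 + 2 * b * x1 - b * c * x3^2 - b * c * x2 * x3 - 2 * b * c * x1 * x3 + a * x2 + 2 * a * x1 + a * c * x2 * x3 + a * c * x2^2 + 2 * a * c * x1 * x2 + 2 * a * b * x1 * x3 + 2 * a * b * x1 * x2 + 3 * a * b * x1^2)"

definition KdN12 :: "'a::comm_ring_1 \<Rightarrow> 'a \<Rightarrow> 'a \<Rightarrow> 'a \<Rightarrow> 'a \<Rightarrow> 'a \<Rightarrow> 'a" where
  "KdN12 a b c x1 x2 x3 = (c * x1 - b * c * x1 * x3 + a * x1 + a * c * x1 * x3 + 2 * a * c * x1 * x2 + a * c * x1^2 + a * b * x1^2)"

definition KdN13 :: "'a::comm_ring_1 \<Rightarrow> 'a \<Rightarrow> 'a \<Rightarrow> 'a \<Rightarrow> 'a \<Rightarrow> 'a \<Rightarrow> 'a" where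
  "KdN13 a b c x1 x2 x3 = (- c * x1 + b * x1 - 2 * b * c * x1 * x3 - b * c * x1 * x2 - b * c * x1^2 + a * c * x1 * x2 + a * b * x1^2)"

definition KdN21 :: "'a::comm_ring_1 \<Rightarrow> 'a \<Rightarrow> 'a \<Rightarrow> 'a \<Rightarrow> 'a \<Rightarrow> 'a \<Rightarrow> 'a" where
  "KdN21 a b c x1 x2 x3 = (b * x2 - b * c * x2 * x3 - a * x2 - a * c * x2^2 - a * b * x2 * x3 - a * b * x2^2 - 2 * a * b * x1 * x2)"

definition KdN22 :: "'a::comm_ring_1 \<Rightarrow> 'a \<Rightarrow> 'a \<Rightarrow> 'a \<Rightarrow> 'a \<Rightarrow> 'a \<Rightarrow> 'a" where
  "KdN22 a b c x1 x2 x3 = (1 + c * x3 + 2 * c * x2 - b * x3 + b * x1 - b * c * x3^2 - 2 * b * c * x2 * x3 - b * c * x1 * x3 - 2 * a * x2 - a * x1 - 2 * a * c * x2 * x3 - 3 * a * c * x2^2 - 2 * a * c * x1 * x2 - a * b * x1 * x3 - 2 * a * b * x1 * x2 - a * b * x1^2)"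

definition KdN23 :: "'a::comm_ring_1 \<Rightarrow> 'a \<Rightarrow> 'a \<Rightarrow> 'a \<Rightarrow> 'a \<Rightarrow> 'a \<Rightarrow> 'a" where
  "KdN23 a b c x1 x2 x3 = (c * x2 - b * x2 - 2 * b * c * x2 * x3 - b * c * x2^2 - b * c * x1 * x2 - a * c * x2^2 - a * b * x1 * x2)"

definition KdN31 :: "'a::comm_ring_1 \<Rightarrow> 'a \<Rightarrow> 'a \<Rightarrow> 'a \<Rightarrow> 'a \<Rightarrow> 'a \<Rightarrow> 'a" where
  "KdN31 a b c x1 x2 x3 = (- b * x3 + b * c * x3^2 + a * x3 + a * c * x2 * x3 - a * b * x3^2 - a * b * x2 * x3 - 2 * a * b * x1 * x3)"

definition KdN32 :: "'a::comm_ring_1 \<Rightarrow> 'a \<Rightarrow> 'a \<Rightarrow> 'a \<Rightarrow> 'a \<Rightarrow> 'a \<Rightarrow> 'a" where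
  "KdN32 a b c x1 x2 x3 = (- c * x3 + b * c * x3^2 - a * x3 + a * c * x3^2 + 2 * a * c * x2 * x3 + a * c * x1 * x3 - a * b * x1 * x3)"

definition KdN33 :: "'a::comm_ring_1 \<Rightarrow> 'a \<Rightarrow> 'a \<Rightarrow> 'a \<Rightarrow> 'a \<Rightarrow> 'a \<Rightarrow> 'a" where
  "KdN33 a b c x1 x2 x3 = (1 - 2 * c * x3 - c * x2 - 2 * b * x3 - b * x1 + 3 * b * c * x3^2 + 2 * b * c * x2 * x3 + 2 * b * c * x1 * x3 - a * x2 + a * x1 + 2 * a * c * x2 * x3 + a * c * x2^2 + a * c * x1 * x2 - 2 * a * b * x1 * x3 - a * b * x1 * x2 - a * b * x1^2)"

definition KF :: "'a::comm_ring_1 \<Rightarrow> 'a \<Rightarrow> 'a \<Rightarrow> 'a \<Rightarrow> 'a \<Rightarrow> 'a \<Rightarrow> 'a" where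
  "KF a b c x1 x2 x3 = (2 * b * c^3 * x1 * x2 * x3^3 + 4 * b * c^3 * x1 * x2^2 * x3^2 - 2 * b * c^4 * x1 * x2 * x3^4 - 2 * b * c^4 * x1 * x2^2 * x3^3 - 4 * b^2 * c^2 * x1 * x2^2 * x3^2 + 4 * b^2 * c^2 * x1^2 * x2 * x3^2 - 2 * b^2 * c^3 * x1 * x2 * x3^4 - 4 * b^2 * c^3 * x1 * x2^2 * x3^3 - 6 * b^2 * c^3 * x1^2 * x2 * x3^3 + 2 * b^2 * c^4 * x1 * x2 * x3^5 + 2 * b^2 * c^4 * x1 * x2^2 * x3^4 + 2 * b^2 * c^4 * x1^2 * x2 * x3^4 - 2 * b^3 * c * x1 * x2 * x3^3 - 4 * b^3 * c * x1^2 * x2 * x3^2 + 2 * b^3 * c^2 * x1 * x2 * x3^4 + 6 * b^3 * c^2 * x1 * x2^2 * x3^3 + 4 * b^3 * c^2 * x1^2 * x2 * x3^3 + 2 * b^4 * c * x1 * x2 * x3^4 + 2 * b^4 * c * x1^2 * x2 * x3^3 - 2 * b^4 * c^2 * x1 * x2 * x3^5 - 2 * b^4 * c^2 * x1 * x2^2 * x3^4 - 2 * b^4 * c^2 * x1^2 * x2 * x3^4 + 2 * a * c^3 * x1 * x2^3 * x3 + 2 * a * c^4 * x1 * x2^3 * x3^2 + 2 * a * c^4 * x1 * x2^4 * x3 + 4 * a * b * c^2 * x1 * x2^2 * x3^2 - 2 * a * b * c^2 * x1 * x2^3 * x3 - 4 * a * b * c^2 * x1^2 * x2 * x3^2 -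 2 * a * b * c^3 * x1 * x2^2 * x3^3 - 8 * a * b * c^3 * x1 * x2^3 * x3^2 - 2 * a * b * c^3 * x1 * x2^4 * x3 + 6 * a * b * c^3 * x1^2 * x2 * x3^3 + 2 * a * b * c^3 * x1^2 * x2^3 * x3 + 2 * a * b * c^4 * x1 * x2^2 * x3^4 - 2 * a * b * c^4 * x1 * x2^4 * x3^2 + 2 * a * b * c^4 * x1^2 * x2^2 * x3^3 - 2 * a * b * c^4 * x1^2 * x2^3 * x3^2 - 4 * a * b^2 * c * x1 * x2^2 * x3^2 + 4 * a * b^2 * c * x1^2 * x2 * x3^2 - 2 * a * b^2 * c * x1^3 * x2 * x3 - 4 * a * b^2 * c^2 * x1 * x2^2 * x3^3 + 6 * a * b^2 * c^2 * x1 * x2^3 * x3^2 - 4 * a * b^2 * c^2 * x1^2 * x2 * x3^3 - 2 * a * b^2 * c^2 * x1^2 * x2^3 * x3 + 6 * a * b^2 * c^2 * x1^3 * x2 * x3^2 - 2 * a * b^2 * c^2 * x1^3 * x2^2 * x3 + 2 * a * b^2 * c^3 * x1 * x2^3 * x3^3 + 2 * a * b^2 * c^3 * x1 * x2^4 * x3^2 - 2 * a * b^2 * c^3 * x1^2 * x2 * x3^4 - 2 * a * b^2 * c^3 * x1^2 * x2^2 * x3^3 + 2 * a * b^2 * c^3 * x1^2 * x2^3 * x3^2 - 2 * a * b^2 * c^3 * x1^3 * x2 * x3^3 + 2 * a * b^3 * x1^3 * x2 * x3 + 6 * a * b^3 * c * x1 * x2^2 * x3^3 - 2 * a * b^3 *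 c * x1^2 * x2 * x3^3 - 8 * a * b^3 * c * x1^3 * x2 * x3^2 + 2 * a * b^3 * c * x1^3 * x2^2 * x3 - 2 * a * b^3 * c * x1^4 * x2 * x3 - 2 * a * b^3 * c^2 * x1 * x2^2 * x3^4 - 2 * a * b^3 * c^2 * x1 * x2^3 * x3^3 - 2 * a * b^3 * c^2 * x1^2 * x2^2 * x3^3 + 2 * a * b^3 * c^2 * x1^3 * x2 * x3^3 + 2 * a * b^3 * c^2 * x1^3 * x2^2 * x3^2 + 2 * a * b^3 * c^2 * x1^4 * x2 * x3^2 + 2 * a * b^4 * x1^3 * x2 * x3^2 + 2 * a * b^4 * x1^4 * x2 * x3 + 2 * a * b^4 * c * x1^2 * x2 * x3^4 + 2 * a * b^4 * c * x1^2 * x2^2 * x3^3 - 2 * a * b^4 * c * x1^3 * x2^2 * x3^2 - 2 * a * b^4 * c * x1^4 * x2 * x3^2 + 2 * a^2 * c^2 * x1 * x2^3 * x3 + 2 * a^2 * c^3 * x1 * x2^3 * x3^2 - 2 * a^2 * c^3 * x1^2 * x2^3 * x3 - 2 * a^2 * c^4 * x1 * x2^4 * x3^2 - 2 * a^2 * c^4 * x1 * x2^5 * x3 - 2 * a^2 * c^4 * x1^2 * x2^4 * x3 - 2 * a^2 * b * c * x1 * x2^3 * x3 + 2 * a^2 * b * c * x1^3 * x2 * x3 - 8 * a^2 * b * c^2 * x1 * x2^3 * x3^2 + 4 * a^2 * b * c^2 * x1^2 * x2^3 * x3 - 6 * a^2 * b * c^2 * x1^3 * x2 * x3^2 + 2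 * a^2 * b * c^2 * x1^3 * x2^2 * x3 - 2 * a^2 * b * c^3 * x1 * x2^3 * x3^3 + 2 * a^2 * b * c^3 * x1 * x2^5 * x3 - 4 * a^2 * b * c^3 * x1^2 * x2^2 * x3^3 - 8 * a^2 * b * c^3 * x1^2 * x2^3 * x3^2 - 4 * a^2 * b * c^3 * x1^3 * x2^2 * x3^2 - 2 * a^2 * b * c^3 * x1^3 * x2^3 * x3 - 2 * a^2 * b^2 * x1^3 * x2 * x3 + 6 * a^2 * b^2 * c * x1 * x2^3 * x3^2 - 2 * a^2 * b^2 * c * x1^2 * x2^3 * x3 + 8 * a^2 * b^2 * c * x1^3 * x2 * x3^2 - 4 * a^2 * b^2 * c * x1^3 * x2^2 * x3 + 2 * a^2 * b^2 * c^2 * x1 * x2^3 * x3^3 + 2 * a^2 * b^2 * c^2 * x1 * x2^4 * x3^2 + 4 * a^2 * b^2 * c^2 * x1^2 * x2^3 * x3^2 + 2 * a^2 * b^2 * c^2 * x1^2 * x2^4 * x3 - 2 * a^2 * b^2 * c^2 * x1^3 * x2 * x3^3 - 4 * a^2 * b^2 * c^2 * x1^3 * x2^2 * x3^2 - 2 * a^2 * b^2 * c^2 * x1^4 * x2 * x3^2 - 2 * a^2 * b^2 * c^2 * x1^4 * x2^2 * x3 - 2 * a^2 * b^3 * x1^3 * x2 * x3^2 + 2 * a^2 * b^3 * x1^3 * x2^2 * x3 + 4 * a^2 * b^3 * c * x1^2 * x2^2 * x3^3 + 4 * a^2 * b^3 * c * x1^2 * x2^3 * x3^2 + 2 * a^2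 * b^3 * c * x1^3 * x2 * x3^3 + 8 * a^2 * b^3 * c * x1^3 * x2^2 * x3^2 + 2 * a^2 * b^3 * c * x1^3 * x2^3 * x3 - 2 * a^2 * b^3 * c * x1^5 * x2 * x3 + 2 * a^2 * b^4 * x1^4 * x2 * x3^2 + 2 * a^2 * b^4 * x1^4 * x2^2 * x3 + 2 * a^2 * b^4 * x1^5 * x2 * x3 - 2 * a^3 * c^2 * x1 * x2^4 * x3 - 2 * a^3 * c^2 * x1^2 * x2^3 * x3 - 2 * a^3 * c^3 * x1 * x2^4 * x3^2 - 2 * a^3 * c^3 * x1 * x2^5 * x3 - 2 * a^3 * c^3 * x1^2 * x2^4 * x3 + 2 * a^3 * b * c * x1 * x2^4 * x3 + 2 * a^3 * b * c * x1^2 * x2^3 * x3 + 2 * a^3 * b * c * x1^3 * x2^2 * x3 + 2 * a^3 * b * c * x1^4 * x2 * x3 + 2 * a^3 * b * c^2 * x1 * x2^4 * x3^2 + 2 * a^3 * b * c^2 * x1 * x2^5 * x3 - 2 * a^3 * b * c^2 * x1^2 * x2^3 * x3^2 + 2 * a^3 * b * c^2 * x1^3 * x2^2 * x3^2 + 2 * a^3 * b * c^2 * x1^4 * x2^2 * x3 - 2 * a^3 * b^2 * x1^3 * x2^2 * x3 - 2 * a^3 * b^2 * x1^4 * x2 * x3 + 2 * a^3 * b^2 * c * x1^2 * x2^3 * x3^2 + 2 * a^3 * b^2 * c * x1^2 * x2^4 * x3 - 2 * a^3 * b^2 * c * x1^3 * x2^2 * x3^2 + 2 * a^3 * b^2 *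 c * x1^4 * x2 * x3^2 + 2 * a^3 * b^2 * c * x1^5 * x2 * x3 - 2 * a^3 * b^3 * x1^4 * x2 * x3^2 - 2 * a^3 * b^3 * x1^4 * x2^2 * x3 - 2 * a^3 * b^3 * x1^5 * x2 * x3)"

definition KC1 :: "'a::comm_ring_1 \<Rightarrow> 'a \<Rightarrow> 'a \<Rightarrow> 'a" where
  "KC1 a b c = (2 * b * c^3 - 2 * b^3 * c)"

definition KH1 :: "'a::comm_ring_1 \<Rightarrow> 'a \<Rightarrow> 'a \<Rightarrow> 'a \<Rightarrow> 'a" where
  "KH1 a b c s = (4 * b * c^3 - 2 * b * c^4 - 2 * b * c^4 * s - 2 * b^2 * c^3 - 10 * b^2 * c^3 * s + 2 * b^2 * c^4 * s + 4 * b^2 * c^4 * s^2 - 4 * b^3 * c + 2 * b^3 * c^2 + 10 * b^3 * c^2 * s + 2 * b^4 * c + 2 * b^4 * c * s - 2 * b^4 * c^2 * s - 4 * b^4 * c^2 * s^2 + 2 * a * c^3 * s + 2 * a * c^4 * s^2 + 2 * a * c^4 * s^3 - 2 * a * b * c^2 * s + 4 * a * b * c^3 * s - 8 * a * b * c^3 * s^2 + 2 * a * b * c^4 * s^2 + 2 * a * b * c^4 * s^3 - 4 * a * b * c^4 * s^4 - 2 * a * b^2 * c * s - 8 * a * b^2 * c^2 * s + 12 * a * b^2 * c^2 * s^2 - 4 * a * b^2 * c^2 * s^3 - 2 * a * b^2 * c^3 * s^2 - 2 * a * b^2 * c^3 * s^3 + 4 * a * b^2 * c^3 * s^4 + 2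 * a * b^3 * s + 4 * a * b^3 * c * s - 8 * a * b^3 * c * s^2 - 2 * a * b^3 * c^2 * s^2 - 2 * a * b^3 * c^2 * s^3 + 4 * a * b^3 * c^2 * s^4 + 2 * a * b^4 * s^2 + 2 * a * b^4 * s^3 + 2 * a * b^4 * c * s^2 + 2 * a * b^4 * c * s^3 - 4 * a * b^4 * c * s^4 + 2 * a^2 * c^2 * s + 2 * a^2 * c^3 * s^2 - 2 * a^2 * c^3 * s^3 - 2 * a^2 * c^4 * s^4 - 4 * a^2 * c^4 * s^5 - 14 * a^2 * b * c^2 * s^2 + 6 * a^2 * b * c^2 * s^3 - 6 * a^2 * b * c^3 * s^3 - 12 * a^2 * b * c^3 * s^4 - 2 * a^2 * b^2 * s + 14 * a^2 * b^2 * c * s^2 - 6 * a^2 * b^2 * c * s^3 - 2 * a^2 * b^3 * s^2 + 2 * a^2 * b^3 * s^3 + 6 * a^2 * b^3 * c * s^3 + 12 * a^2 * b^3 * c * s^4 + 2 * a^2 * b^4 * s^4 + 4 * a^2 * b^4 * s^5 - 4 * a^3 * c^2 * s^3 - 2 * a^3 * c^3 * s^4 - 4 * a^3 * c^3 * s^5 + 8 * a^3 * b * c * s^3 + 2 * a^3 * b * c^2 * s^4 + 4 * a^3 * b * c^2 * s^5 - 4 * a^3 * b^2 * s^3 + 2 * a^3 * b^2 * c * s^4 + 4 * a^3 * b^2 * c * s^5 - 2 * a^3 * b^3 * s^4 - 4 * a^3 * b^3 * s^5)"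

definition KC2 :: "'a::comm_ring_1 \<Rightarrow> 'a \<Rightarrow> 'a \<Rightarrow> 'a" where
  "KC2 a b c = (- 2 * a * b^2 * c + 2 * a * b^3 + 2 * a^2 * b * c - 2 * a^2 * b^2)"

definition KH2 :: "'a::comm_ring_1 \<Rightarrow> 'a \<Rightarrow> 'a \<Rightarrow> 'a \<Rightarrow> 'a" where
  "KH2 a b c s = (6 * b * c^3 * s - 4 * b * c^4 * s^3 + 4 * b^2 * c^2 - 4 * b^2 * c^2 * s - 6 * b^2 * c^3 * s^2 - 6 * b^2 * c^3 * s^3 + 2 * b^2 * c^4 * s^4 + 4 * b^2 * c^4 * s^5 - 4 * b^3 * c - 2 * b^3 * c * s + 4 * b^3 * c^2 * s^2 + 8 * b^3 * c^2 * s^3 + 2 * b^4 * c * s^2 + 2 * b^4 * c * s^3 - 2 * b^4 * c^2 * s^4 - 4 * b^4 * c^2 * s^5 + 2 * a * c^3 * s + 4 * a * c^4 * s^3 - 4 * a * b * c^2 + 2 * a * b * c^2 * s + 8 * a * b * c^3 * s^2 - 12 * a * b * c^3 * s^3 + 4 * a * b^2 * c - 4 * a * b^2 * c * s + 4 * a * b^2 * c^2 * s - 6 * a * b^2 * c^2 * s^2 + 2 * a * b^2 * c^2 * s^3 - 2 * a * b^2 * c^3 * s^3 - 2 * a * b^2 * c^3 * s^4 + 4 * a * b^2 * c^3 * s^5 - 2 * a * b^3 * c - 6 * a * b^3 * c * s - 2 * a * b^3 * c * s^2 + 6 * a * b^3 * c * s^3 + 2 * a * b^3 * c^2 * s^2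 + 4 * a * b^3 * c^2 * s^3 - 2 * a * b^3 * c^2 * s^4 - 4 * a * b^3 * c^2 * s^5 + 2 * a * b^4 + 2 * a * b^4 * s - 2 * a * b^4 * c * s^2 - 2 * a * b^4 * c * s^3 + 4 * a * b^4 * c * s^4 + 2 * a^2 * c^2 * s - 2 * a^2 * c^3 * s^2 + 2 * a^2 * c^3 * s^3 - 2 * a^2 * c^4 * s^4 - 4 * a^2 * c^4 * s^5 - 2 * a^2 * b * c * s - 4 * a^2 * b * c^2 * s + 4 * a^2 * b * c^2 * s^2 - 8 * a^2 * b * c^2 * s^3 - 6 * a^2 * b * c^3 * s^3 - 12 * a^2 * b * c^3 * s^4 + 4 * a^2 * b^2 * c * s - 2 * a^2 * b^2 * c * s^2 + 6 * a^2 * b^2 * c * s^3 - 4 * a^2 * b^2 * c^2 * s^2 - 6 * a^2 * b^2 * c^2 * s^3 + 6 * a^2 * b^2 * c^2 * s^4 + 4 * a^2 * b^2 * c^2 * s^5 - 2 * a^2 * b^3 * c * s + 12 * a^2 * b^3 * c * s^3 + 8 * a^2 * b^3 * c * s^4 + 2 * a^2 * b^4 * s + 4 * a^2 * b^4 * s^2 - 2 * a^3 * c^2 * s^2 - 2 * a^3 * c^2 * s^3 - 2 * a^3 * c^3 * s^4 - 4 * a^3 * c^3 * s^5 + 2 * a^3 * b * c + 2 * a^3 * b * c * s + 2 * a^3 * b * c * s^2 + 2 * a^3 * b * c * s^3 + 2 * a^3 * b * c^2 * s^2 + 2 * a^3 * b * c^2 * s^3 - 2 * a^3 * b * c^2 *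 s^4 + 4 * a^3 * b * c^2 * s^5 - 2 * a^3 * b^2 - 2 * a^3 * b^2 * s + 2 * a^3 * b^2 * c * s + 2 * a^3 * b^2 * c * s^2 - 2 * a^3 * b^2 * c * s^3 + 4 * a^3 * b^2 * c * s^4 - 2 * a^3 * b^3 * s - 4 * a^3 * b^3 * s^2)"

definition KPhi :: "'a::comm_ring_1 \<Rightarrow> 'a \<Rightarrow> 'a \<Rightarrow> 'a \<Rightarrow> 'a \<Rightarrow> 'a \<Rightarrow> 'a \<Rightarrow> 'a \<Rightarrow> 'a \<Rightarrow> 'a \<Rightarrow> 'a" where
  "KPhi a b c x1 x2 x3 z1 z2 z3 d = ((d + (a*z2 + b*z3))*a*x1*x2*(d + ((-a)*z1 + c*z3)) + (d + (a*z2 + b*z3))*b*x1*x3*(z2*c) + (z1*a)*(-a)*x2*x1*(z2*(-a)) + (z1*a)*c*x2*x3*(z2*c) + (z1*b)*(-b)*x3*x1*(z2*(-a)) + (z1*b)*(-c)*x3*x2*(d + ((-a)*z1 + c*z3))) - ((1 - (a*x2 + b*x3))*a*z1*z2*(1 - ((-a)*x1 + c*x3)) + (1 - (a*x2 + b*x3))*b*z1*z3*(- x2*c) + (- x1*a)*(-a)*z2*z1*(- x2*(-a)) + (- x1*a)*c*z2*z3*(- x2*c) + (- x1*b)*(-b)*z3*z1*(- x2*(-a)) + (- x1*b)*(-c)*z3*z2*(1 - ((-a)*x1 + c*x3)))"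
lemma Ksol:
  fixes a b c xa xb xc y1 y2 y3 :: "'a::idom"
  assumes "y1 - xa = y1*(a*xb + b*xc) + xa*(a*y2 + b*y3)"
    and "y2 - xb = y2*((-a)*xa + c*xc) + xb*((-a)*y1 + c*y3)"
    and "y3 - xc = y3*((-b)*xa + (-c)*xb) + xc*((-b)*y1 + (-c)*y2)"
  shows "KD a b c xa xb xc * y1 = KN1 a b c xa xb xc \<and> KD a b c xa xb xc * y2 = KN2 a b c xa xb xc \<and> KD a b c xa xb xc * y3 = KN3 a b c xa xb xc"
  using assms unfolding KD_def KN1_def KN2_def KN3_def by algebra

lemma KNeq:
  fixes a b c xa xb xc :: "'a::idom"
  shows "(KN1 a b c xa xb xc) - xa*(KD a b c xa xb xc) = (KN1 a b c xa xb xc)*(a*xb + b*xc) + xa*(a*(KN2 a b c xa xb xc) + b*(KN3 a b c xa xb xc))"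
   and "(KN2 a b c xa xb xc) - xb*(KD a b c xa xb xc) = (KN2 a b c xa xb xc)*((-a)*xa + c*xc) + xb*((-a)*(KN1 a b c xa xb xc) + c*(KN3 a b c xa xb xc))"
   and "(KN3 a b c xa xb xc) - xc*(KD a b c xa xb xc) = (KN3 a b c xa xb xc)*((-b)*xa + (-c)*xb) + xc*((-b)*(KN1 a b c xa xb xc) + (-c)*(KN2 a b c xa xb xc))"
  unfolding KD_def KN1_def KN2_def KN3_def by algebra+

lemma KMJ:
  fixes a b c xa xb xc :: "'a::idom"
  shows "(1 - (a*xb + b*xc))*(KdN11 a b c xa xb xc * (KD a b c xa xb xc) - (KN1 a b c xa xb xc) * KdD1 a b c xa xb xc) + (- xa*a)*(KdN21 a b c xa xb xc * (KD a b c xa xb xc) - (KN2 a b c xa xb xc) * KdD1 a b c xa xb xc) + (- xa*b)*(KdN31 a b c xa xb xc * (KD a b c xa xb xc) - (KN3 a b c xa xb xc) * KdD1 a b c xa xb xc) = (KD a b c xa xb xc)*(KD a b c xa xb xc) + (KD a b c xa xb xc)*(a*(KN2 a b c xa xb xc) + b*(KN3 a b c xa xb xc)) + 0"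
   and "(1 - (a*xb + b*xc))*(KdN12 a b c xa xb xc * (KD a b c xa xb xc) - (KN1 a b c xa xb xc) * KdD2 a b c xa xb xc) + (- xa*a)*(KdN22 a b c xa xb xc * (KD a b c xa xb xc) - (KN2 a b c xa xb xc) * KdD2 a b c xa xb xc) + (- xa*b)*(KdN32 a b c xa xb xc * (KD a b c xa xb xc) - (KN3 a b c xa xb xc) * KdD2 a b c xa xb xc) = (KD a b c xa xb xc)*(KN1 a b c xa xb xc)*a"
   and "(1 - (a*xb + b*xc))*(KdN13 a b c xa xb xc * (KD a b c xa xb xc) - (KN1 a b c xa xb xc) * KdD3 a b c xa xb xc) + (- xa*a)*(KdN23 a b c xa xb xc * (KD a b c xa xb xc) - (KN2 a b c xa xb xc) * KdD3 a b c xa xb xc) + (- xa*b)*(KdN33 a b c xa xb xc * (KD a b c xa xb xc) - (KN3 a b c xa xb xc) * KdD3 a b c xa xb xc) = (KD a b c xa xb xc)*(KN1 a b c xa xb xc)*b"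
   and "(- xb*(-a))*(KdN11 a b c xa xb xc * (KD a b c xa xb xc) - (KN1 a b c xa xb xc) * KdD1 a b c xa xb xc) + (1 - ((-a)*xa + c*xc))*(KdN21 a b c xa xb xc * (KD a b c xa xb xc) - (KN2 a b c xa xb xc) * KdD1 a b c xa xb xc) + (- xb*c)*(KdN31 a b c xa xb xc * (KD a b c xa xb xc) - (KN3 a b c xa xb xc) * KdD1 a b c xa xb xc) = (KD a b c xa xb xc)*(KN2 a b c xa xb xc)*(-a)"
   and "(- xb*(-a))*(KdN12 a b c xa xb xc * (KD a b c xa xb xc) - (KN1 a b c xa xb xc) * KdD2 a b c xa xb xc) + (1 - ((-a)*xa + c*xc))*(KdN22 a b c xa xb xc * (KD a b c xa xb xc) - (KN2 a b c xa xb xc) * KdD2 a b c xa xb xc) + (- xb*c)*(KdN32 a b c xa xb xc * (KD a b c xa xb xc) - (KN3 a b c xa xb xc) * KdD2 a b c xa xb xc) = (KD a b c xa xb xc)*(KD a b c xa xb xc) + (KD a b c xa xb xc)*((-a)*(KN1 a b c xa xb xc) + c*(KN3 a b c xa xb xc)) + 0"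
   and "(- xb*(-a))*(KdN13 a b c xa xb xc * (KD a b c xa xb xc) - (KN1 a b c xa xb xc) * KdD3 a b c xa xb xc) + (1 - ((-a)*xa + c*xc))*(KdN23 a b c xa xb xc * (KD a b c xa xb xc) - (KN2 a b c xa xb xc) * KdD3 a b c xa xb xc) + (- xb*c)*(KdN33 a b c xa xb xc * (KD a b c xa xb xc) - (KN3 a b c xa xb xc) * KdD3 a b c xa xb xc) = (KD a b c xa xb xc)*(KN2 a b c xa xb xc)*c"
   and "(- xc*(-b))*(KdN11 a b c xa xb xc * (KD a b c xa xb xc) - (KN1 a b c xa xb xc) * KdD1 a b c xa xb xc) + (- xc*(-c))*(KdN21 a b c xa xb xc * (KD a b c xa xb xc) - (KN2 a b c xa xb xc) * KdD1 a b c xa xb xc) + (1 - ((-b)*xa + (-c)*xb))*(KdN31 a b c xa xb xc * (KD a b c xa xb xc) - (KN3 a b c xa xb xc) * KdD1 a b c xa xb xc) = (KD a b c xa xb xc)*(KN3 a b c xa xb xc)*(-b)"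
   and "(- xc*(-b))*(KdN12 a b c xa xb xc * (KD a b c xa xb xc) - (KN1 a b c xa xb xc) * KdD2 a b c xa xb xc) + (- xc*(-c))*(KdN22 a b c xa xb xc * (KD a b c xa xb xc) - (KN2 a b c xa xb xc) * KdD2 a b c xa xb xc) + (1 - ((-b)*xa + (-c)*xb))*(KdN32 a b c xa xb xc * (KD a b c xa xb xc) - (KN3 a b c xa xb xc) * KdD2 a b c xa xb xc) = (KD a b c xa xb xc)*(KN3 a b c xa xb xc)*(-c)"
   and "(- xc*(-b))*(KdN13 a b c xa xb xc * (KD a b c xa xb xc) - (KN1 a b c xa xb xc) * KdD3 a b c xa xb xc) + (- xc*(-c))*(KdN23 a b c xa xb xc * (KD a b c xa xb xc) - (KN2 a b c xa xb xc) * KdD3 a b c xa xb xc) + (1 - ((-b)*xa + (-c)*xb))*(KdN33 a b c xa xb xc * (KD a b c xa xb xc) - (KN3 a b c xa xb xc) * KdD3 a b c xa xb xc) = (KD a b c xa xb xc)*(KD a b c xa xb xc) + (KD a b c xa xb xc)*((-b)*(KN1 a b c xa xb xc) + (-c)*(KN2 a b c xa xb xc)) + 0"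
  unfolding KD_def KN1_def KN2_def KN3_def KdD1_def KdD2_def KdD3_def KdN11_def KdN12_def KdN13_def KdN21_def KdN22_def KdN23_def KdN31_def KdN32_def KdN33_def by algebra+

lemma KPhiF:
  fixes a b c xa xb xc :: "'a::idom"
  shows "KPhi a b c xa xb xc (KN1 a b c xa xb xc) (KN2 a b c xa xb xc) (KN3 a b c xa xb xc) (KD a b c xa xb xc) = KF a b c xa xb xc"
  unfolding KPhi_def KD_def KN1_def KN2_def KN3_def KF_def by algebra

lemma Kcurve:
  fixes a b c s :: "'a::idom"
  shows "KF a b c (s^2) (s^2) s = s^7 * (KC1 a b c + s * KH1 a b c s)"
    and "KF a b c s (s^2) (s^2) = s^7 * (KC2 a b c + s * KH2 a b c s)"
  unfolding KF_def KC1_def KH1_def KC2_def KH2_def by algebra+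

lemma Khomog:
  fixes a b c xa xb xc y1 y2 y3 d :: "'a::idom"
  shows "KPhi a b c xa xb xc (d * y1) (d * y2) (d * y3) d = d^2 * KPhi a b c xa xb xc y1 y2 y3 1"
  unfolding KPhi_def by algebra
lemma d_KN1_1: fixes a b c x1 x2 x3 :: "'a::real_normed_field"
  shows "((\<lambda>t. KN1 a b c t x2 x3) has_field_derivative KdN11 a b c x1 x2 x3) (at x1)"
  unfolding KN1_def KdN11_def
  apply (rule derivative_eq_intros refl)+
  by (simp add: power2_eq_square power3_eq_cube algebra_simps)

lemma d_KN1_2: fixes a b c x1 x2 x3 :: "'a::real_normed_field"
  shows "((\<lambda>t. KN1 a b c x1 t x3) has_field_derivative KdN12 a b c x1 x2 x3) (at x2)"
  unfolding KN1_def KdN12_def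
  apply (rule derivative_eq_intros refl)+
  by (simp add: power2_eq_square power3_eq_cube algebra_simps)

lemma d_KN1_3: fixes a b c x1 x2 x3 :: "'a::real_normed_field"
  shows "((\<lambda>t. KN1 a b c x1 x2 t) has_field_derivative KdN13 a b c x1 x2 x3) (at x3)"
  unfolding KN1_def KdN13_def
  apply (rule derivative_eq_intros refl)+
  by (simp add: power2_eq_square power3_eq_cube algebra_simps)

lemma d_KN2_1: fixes a b c x1 x2 x3 :: "'a::real_normed_field"
  shows "((\<lambda>t. KN2 a b c t x2 x3) has_field_derivative KdN21 a b c x1 x2 x3) (at x1)"
  unfolding KN2_def KdN21_def
  apply (rule derivative_eq_intros refl)+
  by (simp add: power2_eq_square power3_eq_cube algebra_simps)

lemma d_KN2_2: fixes a b c x1 x2 x3 :: "'a::real_normed_field"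
  shows "((\<lambda>t. KN2 a b c x1 t x3) has_field_derivative KdN22 a b c x1 x2 x3) (at x2)"
  unfolding KN2_def KdN22_def
  apply (rule derivative_eq_intros refl)+
  by (simp add: power2_eq_square power3_eq_cube algebra_simps)

lemma d_KN2_3: fixes a b c x1 x2 x3 :: "'a::real_normed_field"
  shows "((\<lambda>t. KN2 a b c x1 x2 t) has_field_derivative KdN23 a b c x1 x2 x3) (at x3)"
  unfolding KN2_def KdN23_def
  apply (rule derivative_eq_intros refl)+
  by (simp add: power2_eq_square power3_eq_cube algebra_simps)

lemma d_KN3_1: fixes a b c x1 x2 x3 :: "'a::real_normed_field"
  shows "((\<lambda>t. KN3 a b c t x2 x3) has_field_derivative KdN31 a b c x1 x2 x3) (at x1)"
  unfolding KN3_def KdN31_def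
  apply (rule derivative_eq_intros refl)+
  by (simp add: power2_eq_square power3_eq_cube algebra_simps)

lemma d_KN3_2: fixes a b c x1 x2 x3 :: "'a::real_normed_field"
  shows "((\<lambda>t. KN3 a b c x1 t x3) has_field_derivative KdN32 a b c x1 x2 x3) (at x2)"
  unfolding KN3_def KdN32_def
  apply (rule derivative_eq_intros refl)+
  by (simp add: power2_eq_square power3_eq_cube algebra_simps)

lemma d_KN3_3: fixes a b c x1 x2 x3 :: "'a::real_normed_field"
  shows "((\<lambda>t. KN3 a b c x1 x2 t) has_field_derivative KdN33 a b c x1 x2 x3) (at x3)"
  unfolding KN3_def KdN33_def
  apply (rule derivative_eq_intros refl)+
  by (simp add: power2_eq_square power3_eq_cube algebra_simps)

lemma d_KD_1: fixes a b c x1 x2 x3 :: "'a::real_normed_field"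
  shows "((\<lambda>t. KD a b c t x2 x3) has_field_derivative KdD1 a b c x1 x2 x3) (at x1)"
  unfolding KD_def KdD1_def
  apply (rule derivative_eq_intros refl)+
  by (simp add: power2_eq_square power3_eq_cube algebra_simps)

lemma d_KD_2: fixes a b c x1 x2 x3 :: "'a::real_normed_field"
  shows "((\<lambda>t. KD a b c x1 t x3) has_field_derivative KdD2 a b c x1 x2 x3) (at x2)"
  unfolding KD_def KdD2_def
  apply (rule derivative_eq_intros refl)+
  by (simp add: power2_eq_square power3_eq_cube algebra_simps)

lemma d_KD_3: fixes a b c x1 x2 x3 :: "'a::real_normed_field"
  shows "((\<lambda>t. KD a b c x1 x2 t) has_field_derivative KdD3 a b c x1 x2 x3) (at x3)"
  unfolding KD_def KdD3_def
  apply (rule derivative_eq_intros refl)+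
  by (simp add: power2_eq_square power3_eq_cube algebra_simps)
lemma core0:
  fixes m11 m12 m13 m21 m22 m23 m31 m32 m33 j11 j12 j13 j21 j22 j23 j31 j32 j33 r11 r12 r13 r21 r22 r23 r31 r32 r33 p11 p12 p13 p21 p22 p23 p31 p32 p33 q11 q12 q13 q21 q22 q23 q31 q32 q33 :: "'a::idom"
  assumes "r11 = m11*j11 + m12*j21 + m13*j31" and "r12 = m11*j12 + m12*j22 + m13*j32" and "r13 = m11*j13 + m12*j23 + m13*j33" and "r21 = m21*j11 + m22*j21 + m23*j31" and "r22 = m21*j12 + m22*j22 + m23*j32" and "r23 = m21*j13 + m22*j23 + m23*j33" and "r31 = m31*j11 + m32*j21 + m33*j31" and "r32 = m31*j12 + m32*j22 + m33*j32" and "r33 = m31*j13 + m32*j23 + m33*j33" and "q11 = j11*p11*j11 + j11*p12*j12 + j11*p13*j13 + j12*p21*j11 + j12*p22*j12 + j12*p23*j13 + j13*p31*j11 + j13*p32*j12 + j13*p33*j13" and "q12 = j11*p11*j21 + j11*p12*j22 + j11*p13*j23 + j12*p21*j21 + j12*p22*j22 + j12*p23*j23 + j13*p31*j21 + j13*p32*j22 + j13*p33*j23" and "q13 = j11*p11*j31 + j11*p12*j32 + j11*p13*j33 + j12*p21*j31 + j12*p22*j32 + j12*p23*j33 + j13*p31*j31 + j13*p32*j32 + j13*p33*j33" and "q21 = j21*p11*j11 + j21*p12*j12 + j21*p13*j13 + j22*p21*j11 + j22*p22*j12 + j22*p23*j13 + j23*p31*j11 + j23*p32*j12 + j23*p33*j13"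 and "q22 = j21*p11*j21 + j21*p12*j22 + j21*p13*j23 + j22*p21*j21 + j22*p22*j22 + j22*p23*j23 + j23*p31*j21 + j23*p32*j22 + j23*p33*j23" and "q23 = j21*p11*j31 + j21*p12*j32 + j21*p13*j33 + j22*p21*j31 + j22*p22*j32 + j22*p23*j33 + j23*p31*j31 + j23*p32*j32 + j23*p33*j33" and "q31 = j31*p11*j11 + j31*p12*j12 + j31*p13*j13 + j32*p21*j11 + j32*p22*j12 + j32*p23*j13 + j33*p31*j11 + j33*p32*j12 + j33*p33*j13" and "q32 = j31*p11*j21 + j31*p12*j22 + j31*p13*j23 + j32*p21*j21 + j32*p22*j22 + j32*p23*j23 + j33*p31*j21 + j33*p32*j22 + j33*p33*j23" and "q33 = j31*p11*j31 + j31*p12*j32 + j31*p13*j33 + j32*p21*j31 + j32*p22*j32 + j32*p23*j33 + j33*p31*j31 + j33*p32*j32 + j33*p33*j33"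
  shows "r11*p11*r21 + r11*p12*r22 + r11*p13*r23 + r12*p21*r21 + r12*p22*r22 + r12*p23*r23 + r13*p31*r21 + r13*p32*r22 + r13*p33*r23 = m11*q11*m21 + m11*q12*m22 + m11*q13*m23 + m12*q21*m21 + m12*q22*m22 + m12*q23*m23 + m13*q31*m21 + m13*q32*m22 + m13*q33*m23"
  unfolding assms by algebra
lemma sum3:
  fixes f :: "'n::finite \<Rightarrow> 'a::comm_monoid_add"
  assumes "i \<noteq> j" "i \<noteq> k" "j \<noteq> k" "\<And>l. l \<notin> {i,j,k} \<Longrightarrow> f l = 0"
  shows "(\<Sum>l\<in>UNIV. f l) = f i + f j + f k"
proof -
  have "(\<Sum>l\<in>UNIV. f l) = (\<Sum>l\<in>{i,j,k}. f l)"
    by (rule sum.mono_neutral_right) (use assms in auto)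
  also have "\<dots> = f i + f j + f k" using assms by (simp add: add.assoc)
  finally show ?thesis .
qed

lemma ev_ne:
  fixes f :: "'a::real_normed_field \<Rightarrow> 'a"
  assumes "(f \<longlongrightarrow> f x) (at x)" "f x \<noteq> c"
  shows "eventually (\<lambda>t. f t \<noteq> c) (nhds x)"
  unfolding eventually_nhds_conv_at using tendsto_imp_eventually_ne[OF assms] assms(2) by auto

lemma divform:
  fixes d n n1 n2 n3 x u c1 c2 c3 :: "'a::field"
  assumes "d \<noteq> 0" "n - x * d = n * u + x * (c1 * n1 + c2 * n2 + c3 * n3)"
  shows "n / d - x = n / d * u + x * (c1 * (n1 / d) + c2 * (n2 / d) + c3 * (n3 / d))"
proof -
  have "n / d - x = (n - x * d) / d" using assms(1) by (simp add: field_simps)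
  also have "\<dots> = (n * u + x * (c1 * n1 + c2 * n2 + c3 * n3)) / d" using assms(2) by simp
  also have "\<dots> = n / d * u + x * (c1 * (n1 / d) + c2 * (n2 / d) + c3 * (n3 / d))"
    using assms(1) by (simp add: field_simps)
  finally show ?thesis .
qed

lemma deriv_pt_aux:
  assumes "(f has_field_derivative g) (at t0)"
  shows "deriv f t0 = g"
  using assms by (rule DERIV_imp_deriv)

locale tri =
  fixes A :: "'n::finite \<Rightarrow> 'n \<Rightarrow> 'a::real_normed_field" and i j k :: 'n
  assumes skew: "skew_symmetric A" and ij: "i \<noteq> j" and ik: "i \<noteq> k" and jk: "j \<noteq> k"
begin

lemma Adiag: "A p p = 0"
proof -
  have "A p p = - A p p" using skew unfolding skew_symmetric_def by blast
  then show ?thesis by simp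
qed

lemma Aanti: "A q p = - A p q" using skew unfolding skew_symmetric_def by blast

lemmas Avals = Adiag[of i] Adiag[of j] Adiag[of k] Aanti[of i j] Aanti[of i k] Aanti[of j k]

abbreviation DD where "DD x1 x2 x3 \<equiv> KD (A i j) (A i k) (A j k) x1 x2 x3"
abbreviation NN1 where "NN1 x1 x2 x3 \<equiv> KN1 (A i j) (A i k) (A j k) x1 x2 x3"
abbreviation NN2 where "NN2 x1 x2 x3 \<equiv> KN2 (A i j) (A i k) (A j k) x1 x2 x3"
abbreviation NN3 where "NN3 x1 x2 x3 \<equiv> KN3 (A i j) (A i k) (A j k) x1 x2 x3"

definition pt :: "'a \<Rightarrow> 'a \<Rightarrow> 'a \<Rightarrow> 'n \<Rightarrow> 'a" where
  "pt x1 x2 x3 = (\<lambda>m. if m = i then x1 else if m = j then x2 else if m = k then x3 else 0)"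

lemma pt_simps: "pt x1 x2 x3 i = x1" "pt x1 x2 x3 j = x2" "pt x1 x2 x3 k = x3"
  "m \<notin> {i,j,k} \<Longrightarrow> pt x1 x2 x3 m = 0"
  using ij ik jk by (auto simp: pt_def)

lemma pt_upd: "(pt x1 x2 x3)(i := t) = pt t x2 x3" "(pt x1 x2 x3)(j := t) = pt x1 t x3"
  "(pt x1 x2 x3)(k := t) = pt x1 x2 t"
  using ij ik jk by (auto simp: pt_def fun_eq_iff)

lemma pt_eqI: "(\<And>m. m \<notin> {i,j,k} \<Longrightarrow> y m = 0) \<Longrightarrow> y = pt (y i) (y j) (y k)"
  by (auto simp: pt_def fun_eq_iff)

definition uo :: "'n \<Rightarrow> 'a \<Rightarrow> 'a \<Rightarrow> 'a \<Rightarrow> 'a" where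
  "uo m x1 x2 x3 = A m i * x1 + A m j * x2 + A m k * x3"

definition dm :: "'a \<Rightarrow> 'a \<Rightarrow> 'a \<Rightarrow> bool" where
  "dm x1 x2 x3 \<longleftrightarrow> DD x1 x2 x3 \<noteq> 0 \<and> (\<forall>m. m \<notin> {i,j,k} \<longrightarrow> uo m x1 x2 x3 \<noteq> 1)"

definition Y :: "'a \<Rightarrow> 'a \<Rightarrow> 'a \<Rightarrow> 'n \<Rightarrow> 'a" where
  "Y x1 x2 x3 = pt (NN1 x1 x2 x3 / DD x1 x2 x3) (NN2 x1 x2 x3 / DD x1 x2 x3) (NN3 x1 x2 x3 / DD x1 x2 x3)"

lemma sum_pt: "(\<Sum>l\<in>UNIV. A p l * pt x1 x2 x3 l) = A p i * x1 + A p j * x2 + A p k * x3"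
  by (subst sum3[OF ij ik jk]) (auto simp: pt_simps)

lemma sum_y: "(\<And>m. m \<notin> {i,j,k} \<Longrightarrow> y m = 0) \<Longrightarrow>
   (\<Sum>l\<in>UNIV. A p l * y l) = A p i * y i + A p j * y j + A p k * y k"
  by (subst sum3[OF ij ik jk]) auto

lemma kahan_eqs_iff:
  assumes "dm x1 x2 x3"
  shows "kahan_eqs A (pt x1 x2 x3) y \<longleftrightarrow> y = Y x1 x2 x3"
proof
  assume E: "kahan_eqs A (pt x1 x2 x3) y"
  have out: "y m = 0" if m: "m \<notin> {i,j,k}" for m
  proof -
    have "y m - pt x1 x2 x3 m = y m * (\<Sum>l\<in>UNIV. A m l * pt x1 x2 x3 l)
        + pt x1 x2 x3 m * (\<Sum>l\<in>UNIV. A m l * y l)"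
      using E by (simp add: kahan_eqs_def)
    then have "y m = y m * uo m x1 x2 x3" using m by (simp add: pt_simps sum_pt uo_def)
    then have "y m * (1 - uo m x1 x2 x3) = 0" by (simp add: algebra_simps)
    moreover have "uo m x1 x2 x3 \<noteq> 1" using assms m by (simp add: dm_def)
    ultimately show ?thesis by simp
  qed
  have sy: "(\<Sum>l\<in>UNIV. A p l * y l) = A p i * y i + A p j * y j + A p k * y k" for p
    by (rule sum_y) (rule out)
  have e: "y p - pt x1 x2 x3 p = y p * (A p i * x1 + A p j * x2 + A p k * x3)
        + pt x1 x2 x3 p * (A p i * y i + A p j * y j + A p k * y k)" for p
    using E unfolding kahan_eqs_def sum_pt sy by blast
  have e1: "y i - x1 = y i * (A i j * x2 + A i k * x3) + x1 * (A i j * y j + A i k * y k)"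
    using e[of i] by (simp add: pt_simps Avals)
  have e2: "y j - x2 = y j * ((- A i j) * x1 + A j k * x3) + x2 * ((- A i j) * y i + A j k * y k)"
    using e[of j] by (simp add: pt_simps Avals)
  have e3: "y k - x3 = y k * ((- A i k) * x1 + (- A j k) * x2) + x3 * ((- A i k) * y i + (- A j k) * y j)"
    using e[of k] by (simp add: pt_simps Avals)
  have s: "DD x1 x2 x3 * y i = NN1 x1 x2 x3 \<and> DD x1 x2 x3 * y j = NN2 x1 x2 x3 \<and> DD x1 x2 x3 * y k = NN3 x1 x2 x3"
    by (rule Ksol[OF e1 e2 e3])
  have d: "DD x1 x2 x3 \<noteq> 0" using assms by (simp add: dm_def)
  have "y = pt (y i) (y j) (y k)" by (rule pt_eqI) (rule out)
  also have "\<dots> = Y x1 x2 x3"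
  proof -
    have "y i = NN1 x1 x2 x3 / DD x1 x2 x3" "y j = NN2 x1 x2 x3 / DD x1 x2 x3" "y k = NN3 x1 x2 x3 / DD x1 x2 x3"
      using s d by (auto simp: eq_divide_eq mult.commute)
    then show ?thesis unfolding Y_def by simp
  qed
  finally show "y = Y x1 x2 x3" .
next
  assume y: "y = Y x1 x2 x3"
  have d: "DD x1 x2 x3 \<noteq> 0" using assms by (simp add: dm_def)
  have out: "y m = 0" if "m \<notin> {i,j,k}" for m using that by (simp add: y Y_def pt_simps)
  have sy: "(\<Sum>l\<in>UNIV. A p l * y l) = A p i * y i + A p j * y j + A p k * y k" for p
    by (rule sum_y) (rule out)
  note N = KNeq[where a="A i j" and b="A i k" and c="A j k" and xa=x1 and xb=x2 and xc=x3]
  have yv: "y i = NN1 x1 x2 x3 / DD x1 x2 x3" "y j = NN2 x1 x2 x3 / DD x1 x2 x3" "y k = NN3 x1 x2 x3 / DD x1 x2 x3"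
    by (simp_all add: y Y_def pt_simps)
  show "kahan_eqs A (pt x1 x2 x3) y"
    unfolding kahan_eqs_def
  proof
    fix p
    show "y p - pt x1 x2 x3 p = y p * (\<Sum>l\<in>UNIV. A p l * pt x1 x2 x3 l) + pt x1 x2 x3 p * (\<Sum>l\<in>UNIV. A p l * y l)"
    proof -
      consider "p = i" | "p = j" | "p = k" | "p \<notin> {i,j,k}" by blast
      then show ?thesis
      proof cases
        case 1
        have h: "NN1 x1 x2 x3 - x1 * DD x1 x2 x3 = NN1 x1 x2 x3 * (A i i * x1 + A i j * x2 + A i k * x3)
           + x1 * (A i i * NN1 x1 x2 x3 + A i j * NN2 x1 x2 x3 + A i k * NN3 x1 x2 x3)"
          using N(1) Avals by algebra
        show ?thesis unfolding sum_pt sy 1 pt_simps yv by (rule divform[OF d h])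
      next
        case 2
        have h: "NN2 x1 x2 x3 - x2 * DD x1 x2 x3 = NN2 x1 x2 x3 * (A j i * x1 + A j j * x2 + A j k * x3)
           + x2 * (A j i * NN1 x1 x2 x3 + A j j * NN2 x1 x2 x3 + A j k * NN3 x1 x2 x3)"
          using N(2) Avals by algebra
        show ?thesis unfolding sum_pt sy 2 pt_simps yv by (rule divform[OF d h])
      next
        case 3
        have h: "NN3 x1 x2 x3 - x3 * DD x1 x2 x3 = NN3 x1 x2 x3 * (A k i * x1 + A k j * x2 + A k k * x3)
           + x3 * (A k i * NN1 x1 x2 x3 + A k j * NN2 x1 x2 x3 + A k k * NN3 x1 x2 x3)"
          using N(3) Avals by algebra
        show ?thesis unfolding sum_pt sy 3 pt_simps yv by (rule divform[OF d h])
      next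
        case 4
        then show ?thesis by (simp add: out pt_simps)
      qed
    qed
  qed
qed

lemma kahan_pt:
  assumes "dm x1 x2 x3"
  shows "kahan_defined A (pt x1 x2 x3)" "kahan A (pt x1 x2 x3) = Y x1 x2 x3"
  using kahan_eqs_iff[OF assms] by (auto simp: kahan_defined_def kahan_def)

end
context tri
begin

abbreviation JJ11 where "JJ11 x1 x2 x3 \<equiv> (KdN11 (A i j) (A i k) (A j k) x1 x2 x3 * DD x1 x2 x3 - NN1 x1 x2 x3 * KdD1 (A i j) (A i k) (A j k) x1 x2 x3) / (DD x1 x2 x3 * DD x1 x2 x3)"
abbreviation JJ12 where "JJ12 x1 x2 x3 \<equiv> (KdN12 (A i j) (A i k) (A j k) x1 x2 x3 * DD x1 x2 x3 - NN1 x1 x2 x3 * KdD2 (A i j) (A i k) (A j k) x1 x2 x3) / (DD x1 x2 x3 * DD x1 x2 x3)"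
abbreviation JJ13 where "JJ13 x1 x2 x3 \<equiv> (KdN13 (A i j) (A i k) (A j k) x1 x2 x3 * DD x1 x2 x3 - NN1 x1 x2 x3 * KdD3 (A i j) (A i k) (A j k) x1 x2 x3) / (DD x1 x2 x3 * DD x1 x2 x3)"
abbreviation JJ21 where "JJ21 x1 x2 x3 \<equiv> (KdN21 (A i j) (A i k) (A j k) x1 x2 x3 * DD x1 x2 x3 - NN2 x1 x2 x3 * KdD1 (A i j) (A i k) (A j k) x1 x2 x3) / (DD x1 x2 x3 * DD x1 x2 x3)"
abbreviation JJ22 where "JJ22 x1 x2 x3 \<equiv> (KdN22 (A i j) (A i k) (A j k) x1 x2 x3 * DD x1 x2 x3 - NN2 x1 x2 x3 * KdD2 (A i j) (A i k) (A j k) x1 x2 x3) / (DD x1 x2 x3 * DD x1 x2 x3)"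
abbreviation JJ23 where "JJ23 x1 x2 x3 \<equiv> (KdN23 (A i j) (A i k) (A j k) x1 x2 x3 * DD x1 x2 x3 - NN2 x1 x2 x3 * KdD3 (A i j) (A i k) (A j k) x1 x2 x3) / (DD x1 x2 x3 * DD x1 x2 x3)"
abbreviation JJ31 where "JJ31 x1 x2 x3 \<equiv> (KdN31 (A i j) (A i k) (A j k) x1 x2 x3 * DD x1 x2 x3 - NN3 x1 x2 x3 * KdD1 (A i j) (A i k) (A j k) x1 x2 x3) / (DD x1 x2 x3 * DD x1 x2 x3)"
abbreviation JJ32 where "JJ32 x1 x2 x3 \<equiv> (KdN32 (A i j) (A i k) (A j k) x1 x2 x3 * DD x1 x2 x3 - NN3 x1 x2 x3 * KdD2 (A i j) (A i k) (A j k) x1 x2 x3) / (DD x1 x2 x3 * DD x1 x2 x3)"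
abbreviation JJ33 where "JJ33 x1 x2 x3 \<equiv> (KdN33 (A i j) (A i k) (A j k) x1 x2 x3 * DD x1 x2 x3 - NN3 x1 x2 x3 * KdD3 (A i j) (A i k) (A j k) x1 x2 x3) / (DD x1 x2 x3 * DD x1 x2 x3)"

lemma ev1:
  assumes "dm x1 x2 x3"
  shows "eventually (\<lambda>t. dm t x2 x3) (nhds x1)"
proof -
  have D: "eventually (\<lambda>t. DD t x2 x3 \<noteq> 0) (nhds x1)"
  proof (rule ev_ne)
    show "((\<lambda>t. DD t x2 x3) \<longlongrightarrow> DD x1 x2 x3) (at x1)" unfolding KD_def by (intro tendsto_intros)
    show "DD x1 x2 x3 \<noteq> 0" using assms by (simp add: dm_def)
  qed
  have U: "eventually (\<lambda>t. \<forall>m. m \<notin> {i,j,k} \<longrightarrow> uo m t x2 x3 \<noteq> 1) (nhds x1)"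
  proof (rule eventually_all_finite)
    fix m
    show "eventually (\<lambda>t. m \<notin> {i,j,k} \<longrightarrow> uo m t x2 x3 \<noteq> 1) (nhds x1)"
    proof (cases "m \<in> {i,j,k}")
      case True then show ?thesis by simp
    next
      case False
      have "eventually (\<lambda>t. uo m t x2 x3 \<noteq> 1) (nhds x1)"
      proof (rule ev_ne)
        show "((\<lambda>t. uo m t x2 x3) \<longlongrightarrow> uo m x1 x2 x3) (at x1)" unfolding uo_def by (intro tendsto_intros)
        show "uo m x1 x2 x3 \<noteq> 1" using assms False by (simp add: dm_def)
      qed
      then show ?thesis by (rule eventually_mono) simp
    qed
  qed
  show ?thesis using eventually_conj[OF D U] by (simp add: dm_def)
qed


lemma ev2:
  assumes "dm x1 x2 x3"
  shows "eventually (\<lambda>t. dm x1 t x3) (nhds x2)"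
proof -
  have D: "eventually (\<lambda>t. DD x1 t x3 \<noteq> 0) (nhds x2)"
  proof (rule ev_ne)
    show "((\<lambda>t. DD x1 t x3) \<longlongrightarrow> DD x1 x2 x3) (at x2)" unfolding KD_def by (intro tendsto_intros)
    show "DD x1 x2 x3 \<noteq> 0" using assms by (simp add: dm_def)
  qed
  have U: "eventually (\<lambda>t. \<forall>m. m \<notin> {i,j,k} \<longrightarrow> uo m x1 t x3 \<noteq> 1) (nhds x2)"
  proof (rule eventually_all_finite)
    fix m
    show "eventually (\<lambda>t. m \<notin> {i,j,k} \<longrightarrow> uo m x1 t x3 \<noteq> 1) (nhds x2)"
    proof (cases "m \<in> {i,j,k}")
      case True then show ?thesis by simp
    next
      case False
      have "eventually (\<lambda>t. uo m x1 t x3 \<noteq> 1) (nhds x2)"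
      proof (rule ev_ne)
        show "((\<lambda>t. uo m x1 t x3) \<longlongrightarrow> uo m x1 x2 x3) (at x2)" unfolding uo_def by (intro tendsto_intros)
        show "uo m x1 x2 x3 \<noteq> 1" using assms False by (simp add: dm_def)
      qed
      then show ?thesis by (rule eventually_mono) simp
    qed
  qed
  show ?thesis using eventually_conj[OF D U] by (simp add: dm_def)
qed


lemma ev3:
  assumes "dm x1 x2 x3"
  shows "eventually (\<lambda>t. dm x1 x2 t) (nhds x3)"
proof -
  have D: "eventually (\<lambda>t. DD x1 x2 t \<noteq> 0) (nhds x3)"
  proof (rule ev_ne)
    show "((\<lambda>t. DD x1 x2 t) \<longlongrightarrow> DD x1 x2 x3) (at x3)" unfolding KD_def by (intro tendsto_intros)
    show "DD x1 x2 x3 \<noteq> 0" using assms by (simp add: dm_def)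
  qed
  have U: "eventually (\<lambda>t. \<forall>m. m \<notin> {i,j,k} \<longrightarrow> uo m x1 x2 t \<noteq> 1) (nhds x3)"
  proof (rule eventually_all_finite)
    fix m
    show "eventually (\<lambda>t. m \<notin> {i,j,k} \<longrightarrow> uo m x1 x2 t \<noteq> 1) (nhds x3)"
    proof (cases "m \<in> {i,j,k}")
      case True then show ?thesis by simp
    next
      case False
      have "eventually (\<lambda>t. uo m x1 x2 t \<noteq> 1) (nhds x3)"
      proof (rule ev_ne)
        show "((\<lambda>t. uo m x1 x2 t) \<longlongrightarrow> uo m x1 x2 x3) (at x3)" unfolding uo_def by (intro tendsto_intros)
        show "uo m x1 x2 x3 \<noteq> 1" using assms False by (simp add: dm_def)
      qed
      then show ?thesis by (rule eventually_mono) simp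
    qed
  qed
  show ?thesis using eventually_conj[OF D U] by (simp add: dm_def)
qed


lemma deriv_pt:
  assumes "(f1 has_field_derivative g1) (at t0)" "(f2 has_field_derivative g2) (at t0)"
    "(f3 has_field_derivative g3) (at t0)"
  shows "deriv (\<lambda>t. pt (f1 t) (f2 t) (f3 t) p) t0 = pt g1 g2 g3 p"
proof -
  consider "p = i" | "p = j" | "p = k" | "p \<notin> {i,j,k}" by blast
  then show ?thesis
  proof cases
    case 1
    then have "(\<lambda>t. pt (f1 t) (f2 t) (f3 t) p) = f1" by (auto simp: pt_simps fun_eq_iff)
    then show ?thesis using assms(1) by (simp add: 1 pt_simps DERIV_imp_deriv)
  next
    case 2
    then have "(\<lambda>t. pt (f1 t) (f2 t) (f3 t) p) = f2" by (auto simp: pt_simps fun_eq_iff)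
    then show ?thesis using assms(2) by (simp add: 2 pt_simps DERIV_imp_deriv)
  next
    case 3
    then have "(\<lambda>t. pt (f1 t) (f2 t) (f3 t) p) = f3" by (auto simp: pt_simps fun_eq_iff)
    then show ?thesis using assms(3) by (simp add: 3 pt_simps DERIV_imp_deriv)
  next
    case 4
    then have "(\<lambda>t. pt (f1 t) (f2 t) (f3 t) p) = (\<lambda>t. 0)" by (auto simp: pt_simps fun_eq_iff)
    then show ?thesis using 4 by (simp add: pt_simps DERIV_imp_deriv[OF DERIV_const])
  qed
qed


lemma pd1:
  assumes "dm x1 x2 x3"
  shows "partial_deriv (\<lambda>z. kahan A z p) i (pt x1 x2 x3) = pt (JJ11 x1 x2 x3) (JJ21 x1 x2 x3) (JJ31 x1 x2 x3) p"
proof -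
  have d: "DD x1 x2 x3 \<noteq> 0" using assms by (simp add: dm_def)
  have ev: "eventually (\<lambda>t. kahan A (pt t x2 x3) p = pt (NN1 t x2 x3 / DD t x2 x3) (NN2 t x2 x3 / DD t x2 x3) (NN3 t x2 x3 / DD t x2 x3) p) (nhds x1)"
    using ev1[OF assms] by (rule eventually_mono) (simp add: kahan_pt Y_def)
  have "partial_deriv (\<lambda>z. kahan A z p) i (pt x1 x2 x3) = deriv (\<lambda>t. kahan A (pt t x2 x3) p) x1"
    by (simp add: partial_deriv_def pt_upd pt_simps)
  also have "\<dots> = deriv (\<lambda>t. pt (NN1 t x2 x3 / DD t x2 x3) (NN2 t x2 x3 / DD t x2 x3) (NN3 t x2 x3 / DD t x2 x3) p) x1"
    by (rule deriv_cong_ev[OF ev refl])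
  also have "\<dots> = pt (JJ11 x1 x2 x3) (JJ21 x1 x2 x3) (JJ31 x1 x2 x3) p"
    by (rule deriv_pt) (rule DERIV_divide[OF d_KN1_1 d_KD_1 d], rule DERIV_divide[OF d_KN2_1 d_KD_1 d], rule DERIV_divide[OF d_KN3_1 d_KD_1 d])
  finally show ?thesis .
qed


lemma pd2:
  assumes "dm x1 x2 x3"
  shows "partial_deriv (\<lambda>z. kahan A z p) j (pt x1 x2 x3) = pt (JJ12 x1 x2 x3) (JJ22 x1 x2 x3) (JJ32 x1 x2 x3) p"
proof -
  have d: "DD x1 x2 x3 \<noteq> 0" using assms by (simp add: dm_def)
  have ev: "eventually (\<lambda>t. kahan A (pt x1 t x3) p = pt (NN1 x1 t x3 / DD x1 t x3) (NN2 x1 t x3 / DD x1 t x3) (NN3 x1 t x3 / DD x1 t x3) p) (nhds x2)"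
    using ev2[OF assms] by (rule eventually_mono) (simp add: kahan_pt Y_def)
  have "partial_deriv (\<lambda>z. kahan A z p) j (pt x1 x2 x3) = deriv (\<lambda>t. kahan A (pt x1 t x3) p) x2"
    by (simp add: partial_deriv_def pt_upd pt_simps)
  also have "\<dots> = deriv (\<lambda>t. pt (NN1 x1 t x3 / DD x1 t x3) (NN2 x1 t x3 / DD x1 t x3) (NN3 x1 t x3 / DD x1 t x3) p) x2"
    by (rule deriv_cong_ev[OF ev refl])
  also have "\<dots> = pt (JJ12 x1 x2 x3) (JJ22 x1 x2 x3) (JJ32 x1 x2 x3) p"
    by (rule deriv_pt) (rule DERIV_divide[OF d_KN1_2 d_KD_2 d], rule DERIV_divide[OF d_KN2_2 d_KD_2 d], rule DERIV_divide[OF d_KN3_2 d_KD_2 d])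
  finally show ?thesis .
qed


lemma pd3:
  assumes "dm x1 x2 x3"
  shows "partial_deriv (\<lambda>z. kahan A z p) k (pt x1 x2 x3) = pt (JJ13 x1 x2 x3) (JJ23 x1 x2 x3) (JJ33 x1 x2 x3) p"
proof -
  have d: "DD x1 x2 x3 \<noteq> 0" using assms by (simp add: dm_def)
  have ev: "eventually (\<lambda>t. kahan A (pt x1 x2 t) p = pt (NN1 x1 x2 t / DD x1 x2 t) (NN2 x1 x2 t / DD x1 x2 t) (NN3 x1 x2 t / DD x1 x2 t) p) (nhds x3)"
    using ev3[OF assms] by (rule eventually_mono) (simp add: kahan_pt Y_def)
  have "partial_deriv (\<lambda>z. kahan A z p) k (pt x1 x2 x3) = deriv (\<lambda>t. kahan A (pt x1 x2 t) p) x3"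
    by (simp add: partial_deriv_def pt_upd pt_simps)
  also have "\<dots> = deriv (\<lambda>t. pt (NN1 x1 x2 t / DD x1 x2 t) (NN2 x1 x2 t / DD x1 x2 t) (NN3 x1 x2 t / DD x1 x2 t) p) x3"
    by (rule deriv_cong_ev[OF ev refl])
  also have "\<dots> = pt (JJ13 x1 x2 x3) (JJ23 x1 x2 x3) (JJ33 x1 x2 x3) p"
    by (rule deriv_pt) (rule DERIV_divide[OF d_KN1_3 d_KD_3 d], rule DERIV_divide[OF d_KN2_3 d_KD_3 d], rule DERIV_divide[OF d_KN3_3 d_KD_3 d])
  finally show ?thesis .
qed


lemma pb3:
  "poisson_bracket A f g (pt x1 x2 x3) = (A i i * x1 * x1 * partial_deriv f i (pt x1 x2 x3) * partial_deriv g i (pt x1 x2 x3) + A i j * x1 * x2 * partial_deriv f i (pt x1 x2 x3) * partial_deriv g j (pt x1 x2 x3) + A i k * x1 * x3 * partial_deriv f i (pt x1 x2 x3) * partial_deriv g k (pt x1 x2 x3)) + (A j i * x2 * x1 * partial_deriv f j (pt x1 x2 x3) * partial_deriv g i (pt x1 x2 x3) + A j j * x2 * x2 * partial_deriv f j (pt x1 x2 x3) * partial_deriv g j (pt x1 x2 x3) + A j k * x2 * x3 * partial_deriv f j (pt x1 x2 x3) * partial_deriv g k (pt x1 x2 x3)) + (A k i * x3 * x1 * partial_deriv f k (pt x1 x2 x3) * partial_deriv g i (pt x1 x2 x3) + A k j * x3 * x2 * partial_deriv f k (pt x1 x2 x3) * partial_deriv g j (pt x1 x2 x3) + A k k * x3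 * x3 * partial_deriv f k (pt x1 x2 x3) * partial_deriv g k (pt x1 x2 x3))"
proof -
  have inner: "(\<Sum>l\<in>UNIV. A m l * pt x1 x2 x3 m * pt x1 x2 x3 l * partial_deriv f m (pt x1 x2 x3) * partial_deriv g l (pt x1 x2 x3))
     = A m i * pt x1 x2 x3 m * x1 * partial_deriv f m (pt x1 x2 x3) * partial_deriv g i (pt x1 x2 x3) + A m j * pt x1 x2 x3 m * x2 * partial_deriv f m (pt x1 x2 x3) * partial_deriv g j (pt x1 x2 x3) + A m k * pt x1 x2 x3 m * x3 * partial_deriv f m (pt x1 x2 x3) * partial_deriv g k (pt x1 x2 x3)" for m
    by (subst sum3[OF ij ik jk]) (auto simp: pt_simps)
  have outer: "(\<Sum>m\<in>UNIV. \<Sum>l\<in>UNIV. A m l * pt x1 x2 x3 m * pt x1 x2 x3 l * partial_deriv f m (pt x1 x2 x3) * partial_deriv g l (pt x1 x2 x3))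
    = (\<Sum>l\<in>UNIV. A i l * pt x1 x2 x3 i * pt x1 x2 x3 l * partial_deriv f i (pt x1 x2 x3) * partial_deriv g l (pt x1 x2 x3))
    + (\<Sum>l\<in>UNIV. A j l * pt x1 x2 x3 j * pt x1 x2 x3 l * partial_deriv f j (pt x1 x2 x3) * partial_deriv g l (pt x1 x2 x3))
    + (\<Sum>l\<in>UNIV. A k l * pt x1 x2 x3 k * pt x1 x2 x3 l * partial_deriv f k (pt x1 x2 x3) * partial_deriv g l (pt x1 x2 x3))"
    by (rule sum3[OF ij ik jk]) (simp add: pt_simps)
  show ?thesis unfolding poisson_bracket_def outer unfolding inner by (simp only: pt_simps)
qed


lemma KF_zero:
  assumes KP: "kahan_poisson A" and dom: "dm x1 x2 x3"
  shows "KF (A i j) (A i k) (A j k) x1 x2 x3 = 0"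
proof -
  define d where "d = DD x1 x2 x3"
  have d0: "d \<noteq> 0" using dom by (simp add: dm_def d_def)
  define y1 where "y1 = NN1 x1 x2 x3 / d"
  define y2 where "y2 = NN2 x1 x2 x3 / d"
  define y3 where "y3 = NN3 x1 x2 x3 / d"
  have yr: "d * y1 = NN1 x1 x2 x3" "d * y2 = NN2 x1 x2 x3" "d * y3 = NN3 x1 x2 x3" using d0 by (simp_all add: y1_def y2_def y3_def)
  define j11 where "j11 = JJ11 x1 x2 x3"
  define j12 where "j12 = JJ12 x1 x2 x3"
  define j13 where "j13 = JJ13 x1 x2 x3"
  define j21 where "j21 = JJ21 x1 x2 x3"
  define j22 where "j22 = JJ22 x1 x2 x3"
  define j23 where "j23 = JJ23 x1 x2 x3"
  define j31 where "j31 = JJ31 x1 x2 x3"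
  define j32 where "j32 = JJ32 x1 x2 x3"
  define j33 where "j33 = JJ33 x1 x2 x3"
  have jr: "d * d * j11 = KdN11 (A i j) (A i k) (A j k) x1 x2 x3 * d - NN1 x1 x2 x3 * KdD1 (A i j) (A i k) (A j k) x1 x2 x3" "d * d * j12 = KdN12 (A i j) (A i k) (A j k) x1 x2 x3 * d - NN1 x1 x2 x3 * KdD2 (A i j) (A i k) (A j k) x1 x2 x3" "d * d * j13 = KdN13 (A i j) (A i k) (A j k) x1 x2 x3 * d - NN1 x1 x2 x3 * KdD3 (A i j) (A i k) (A j k) x1 x2 x3" "d * d * j21 = KdN21 (A i j) (A i k) (A j k) x1 x2 x3 * d - NN2 x1 x2 x3 * KdD1 (A i j) (A i k) (A j k) x1 x2 x3" "d * d * j22 = KdN22 (A i j) (A i k) (A j k) x1 x2 x3 * d - NN2 x1 x2 x3 * KdD2 (A i j) (A i k) (A j k) x1 x2 x3" "d * d * j23 = KdN23 (A i j) (A i k) (A j k) x1 x2 x3 * d - NN2 x1 x2 x3 * KdD3 (A i j) (A i k) (A j k) x1 x2 x3" "d * d * j31 = KdN31 (A i j) (A i k) (A j k) x1 x2 x3 * d - NN3 x1 x2 x3 * KdD1 (A i j) (A i k) (A j k) x1 x2 x3" "d * d * j32 = KdN32 (A i j) (A i k) (A j k) x1 x2 x3 * d - NN3 x1 x2 x3 * KdD2 (A i j) (A i k) (A j k) x1 x2 x3" "d * d * j33 = KdN33 (A i j) (A i k) (A j k) x1 x2 x3 * d - NN3 x1 x2 x3 * KdD3 (A i j) (A i k)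 (A j k) x1 x2 x3"
    using d0 by (simp_all add: j11_def j12_def j13_def j21_def j22_def j23_def j31_def j32_def j33_def d_def)
  have kd: "kahan_defined A (pt x1 x2 x3)" by (rule kahan_pt(1)[OF dom])
  have kx: "kahan A (pt x1 x2 x3) = pt y1 y2 y3" using kahan_pt(2)[OF dom] by (simp add: Y_def y1_def y2_def y3_def d_def)
  have pdi: "partial_deriv (\<lambda>z. kahan A z p) i (pt x1 x2 x3) = pt j11 j21 j31 p" for p using pd1[OF dom] by (simp add: j11_def j12_def j13_def j21_def j22_def j23_def j31_def j32_def j33_def)
  have pdj: "partial_deriv (\<lambda>z. kahan A z p) j (pt x1 x2 x3) = pt j12 j22 j32 p" for p using pd2[OF dom] by (simp add: j11_def j12_def j13_def j21_def j22_def j23_def j31_def j32_def j33_def)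
  have pdk: "partial_deriv (\<lambda>z. kahan A z p) k (pt x1 x2 x3) = pt j13 j23 j33 p" for p using pd3[OF dom] by (simp add: j11_def j12_def j13_def j21_def j22_def j23_def j31_def j32_def j33_def)
  have br: "poisson_bracket A (\<lambda>z. kahan A z p) (\<lambda>z. kahan A z q) (pt x1 x2 x3) = A p q * pt y1 y2 y3 p * pt y1 y2 y3 q" for p q
  proof -
    have "poisson_bracket A (\<lambda>z. kahan A z p) (\<lambda>z. kahan A z q) (pt x1 x2 x3) = A p q * kahan A (pt x1 x2 x3) p * kahan A (pt x1 x2 x3) q"
      using KP kd unfolding kahan_poisson_def by blast
    then show ?thesis unfolding kx .
  qed
  define p11 where "p11 = A i i * x1 * x1"
  define q11 where "q11 = A i i * y1 * y1"
  define p12 where "p12 = A i j * x1 * x2"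
  define q12 where "q12 = A i j * y1 * y2"
  define p13 where "p13 = A i k * x1 * x3"
  define q13 where "q13 = A i k * y1 * y3"
  define p21 where "p21 = A j i * x2 * x1"
  define q21 where "q21 = A j i * y2 * y1"
  define p22 where "p22 = A j j * x2 * x2"
  define q22 where "q22 = A j j * y2 * y2"
  define p23 where "p23 = A j k * x2 * x3"
  define q23 where "q23 = A j k * y2 * y3"
  define p31 where "p31 = A k i * x3 * x1"
  define q31 where "q31 = A k i * y3 * y1"
  define p32 where "p32 = A k j * x3 * x2"
  define q32 where "q32 = A k j * y3 * y2"
  define p33 where "p33 = A k k * x3 * x3"
  define q33 where "q33 = A k k * y3 * y3"
  have B11: "q11 = j11*p11*j11 + j11*p12*j12 + j11*p13*j13 + j12*p21*j11 + j12*p22*j12 + j12*p23*j13 + j13*p31*j11 + j13*p32*j12 + j13*p33*j13"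
    using br[of i i] unfolding pb3 pdi pdj pdk pt_simps p11_def p12_def p13_def p21_def p22_def p23_def p31_def p32_def p33_def q11_def by algebra
  have B12: "q12 = j11*p11*j21 + j11*p12*j22 + j11*p13*j23 + j12*p21*j21 + j12*p22*j22 + j12*p23*j23 + j13*p31*j21 + j13*p32*j22 + j13*p33*j23"
    using br[of i j] unfolding pb3 pdi pdj pdk pt_simps p11_def p12_def p13_def p21_def p22_def p23_def p31_def p32_def p33_def q12_def by algebra
  have B13: "q13 = j11*p11*j31 + j11*p12*j32 + j11*p13*j33 + j12*p21*j31 + j12*p22*j32 + j12*p23*j33 + j13*p31*j31 + j13*p32*j32 + j13*p33*j33"
    using br[of i k] unfolding pb3 pdi pdj pdk pt_simps p11_def p12_def p13_def p21_def p22_def p23_def p31_def p32_def p33_def q13_def by algebra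
  have B21: "q21 = j21*p11*j11 + j21*p12*j12 + j21*p13*j13 + j22*p21*j11 + j22*p22*j12 + j22*p23*j13 + j23*p31*j11 + j23*p32*j12 + j23*p33*j13"
    using br[of j i] unfolding pb3 pdi pdj pdk pt_simps p11_def p12_def p13_def p21_def p22_def p23_def p31_def p32_def p33_def q21_def by algebra
  have B22: "q22 = j21*p11*j21 + j21*p12*j22 + j21*p13*j23 + j22*p21*j21 + j22*p22*j22 + j22*p23*j23 + j23*p31*j21 + j23*p32*j22 + j23*p33*j23"
    using br[of j j] unfolding pb3 pdi pdj pdk pt_simps p11_def p12_def p13_def p21_def p22_def p23_def p31_def p32_def p33_def q22_def by algebra
  have B23: "q23 = j21*p11*j31 + j21*p12*j32 + j21*p13*j33 + j22*p21*j31 + j22*p22*j32 + j22*p23*j33 + j23*p31*j31 + j23*p32*j32 + j23*p33*j33"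
    using br[of j k] unfolding pb3 pdi pdj pdk pt_simps p11_def p12_def p13_def p21_def p22_def p23_def p31_def p32_def p33_def q23_def by algebra
  have B31: "q31 = j31*p11*j11 + j31*p12*j12 + j31*p13*j13 + j32*p21*j11 + j32*p22*j12 + j32*p23*j13 + j33*p31*j11 + j33*p32*j12 + j33*p33*j13"
    using br[of k i] unfolding pb3 pdi pdj pdk pt_simps p11_def p12_def p13_def p21_def p22_def p23_def p31_def p32_def p33_def q31_def by algebra
  have B32: "q32 = j31*p11*j21 + j31*p12*j22 + j31*p13*j23 + j32*p21*j21 + j32*p22*j22 + j32*p23*j23 + j33*p31*j21 + j33*p32*j22 + j33*p33*j23"
    using br[of k j] unfolding pb3 pdi pdj pdk pt_simps p11_def p12_def p13_def p21_def p22_def p23_def p31_def p32_def p33_def q32_def by algebra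
  have B33: "q33 = j31*p11*j31 + j31*p12*j32 + j31*p13*j33 + j32*p21*j31 + j32*p22*j32 + j32*p23*j33 + j33*p31*j31 + j33*p32*j32 + j33*p33*j33"
    using br[of k k] unfolding pb3 pdi pdj pdk pt_simps p11_def p12_def p13_def p21_def p22_def p23_def p31_def p32_def p33_def q33_def by algebra
  define m11 where "m11 = (1 - (A i i * x1 + A i j * x2 + A i k * x3)) - x1 * A i i"
  define r11 where "r11 = (1 + (A i i * y1 + A i j * y2 + A i k * y3)) + y1 * A i i"
  define m12 where "m12 = 0 - x1 * A i j"
  define r12 where "r12 = 0 + y1 * A i j"
  define m13 where "m13 = 0 - x1 * A i k"
  define r13 where "r13 = 0 + y1 * A i k"
  define m21 where "m21 = 0 - x2 * A j i"
  define r21 where "r21 = 0 + y2 * A j i"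
  define m22 where "m22 = (1 - (A j i * x1 + A j j * x2 + A j k * x3)) - x2 * A j j"
  define r22 where "r22 = (1 + (A j i * y1 + A j j * y2 + A j k * y3)) + y2 * A j j"
  define m23 where "m23 = 0 - x2 * A j k"
  define r23 where "r23 = 0 + y2 * A j k"
  define m31 where "m31 = 0 - x3 * A k i"
  define r31 where "r31 = 0 + y3 * A k i"
  define m32 where "m32 = 0 - x3 * A k j"
  define r32 where "r32 = 0 + y3 * A k j"
  define m33 where "m33 = (1 - (A k i * x1 + A k j * x2 + A k k * x3)) - x3 * A k k"
  define r33 where "r33 = (1 + (A k i * y1 + A k j * y2 + A k k * y3)) + y3 * A k k"
  have R11: "r11 = m11*j11 + m12*j21 + m13*j31"
  proof -
    have KM: "(1 - ((A i j)*x2 + (A i k)*x3))*(KdN11 (A i j) (A i k) (A j k) x1 x2 x3 * (d) - (KN1 (A i j) (A i k) (A j k) x1 x2 x3) * KdD1 (A i j) (A i k) (A j k) x1 x2 x3) + (- x1*(A i j))*(KdN21 (A i j) (A i k) (A j k) x1 x2 x3 * (d) - (KN2 (A i j) (A i k) (A j k) x1 x2 x3) * KdD1 (A i j) (A i k) (A j k) x1 x2 x3) + (- x1*(A i k))*(KdN31 (A i j) (A i k) (A j k) x1 x2 x3 * (d) - (KN3 (A i j) (A i k) (A j k) x1 x2 x3) * KdD1 (A i j) (A i k) (A j k) x1 x2 x3) = (d)*(d) + (d)*((A i j)*(KN2 (A i j) (A i k) (A j k) x1 x2 x3) + (A i k)*(KN3 (A i j) (A i k) (A j k) x1 x2 x3))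 + 0"
      using KMJ(1)[where a="A i j" and b="A i k" and c="A j k" and xa=x1 and xb=x2 and xc=x3] unfolding d_def[symmetric] .
    have z1: "m11*(d * d * j11 - (KdN11 (A i j) (A i k) (A j k) x1 x2 x3 * d - NN1 x1 x2 x3 * KdD1 (A i j) (A i k) (A j k) x1 x2 x3)) + m12*(d * d * j21 - (KdN21 (A i j) (A i k) (A j k) x1 x2 x3 * d - NN2 x1 x2 x3 * KdD1 (A i j) (A i k) (A j k) x1 x2 x3)) + m13*(d * d * j31 - (KdN31 (A i j) (A i k) (A j k) x1 x2 x3 * d - NN3 x1 x2 x3 * KdD1 (A i j) (A i k) (A j k) x1 x2 x3)) = 0" by (simp add: jr)
    have z2: "d * (A i i * (d * y1 - NN1 x1 x2 x3) + A i j * (d * y2 - NN2 x1 x2 x3) + A i k * (d * y3 - NN3 x1 x2 x3)) + d * A i i * (d * y1 - NN1 x1 x2 x3) = 0" by (simp add: yr)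
    have z3: "((d)*(d) + (d)*((A i j)*(KN2 (A i j) (A i k) (A j k) x1 x2 x3) + (A i k)*(KN3 (A i j) (A i k) (A j k) x1 x2 x3)) + 0) - ((1 - ((A i j)*x2 + (A i k)*x3))*(KdN11 (A i j) (A i k) (A j k) x1 x2 x3 * (d) - (KN1 (A i j) (A i k) (A j k) x1 x2 x3) * KdD1 (A i j) (A i k) (A j k) x1 x2 x3) + (- x1*(A i j))*(KdN21 (A i j) (A i k) (A j k) x1 x2 x3 * (d) - (KN2 (A i j) (A i k) (A j k) x1 x2 x3) * KdD1 (A i j) (A i k) (A j k) x1 x2 x3) + (- x1*(A i k))*(KdN31 (A i j) (A i k) (A j k) x1 x2 x3 * (d) - (KN3 (A i j) (A i k) (A j k) x1 x2 x3) * KdD1 (A i j) (A i k) (A j k) x1 x2 x3)) = 0" by (simp only: KM diff_self)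
    have "d * d * (r11 - (m11*j11 + m12*j21 + m13*j31)) = - (m11*(d * d * j11 - (KdN11 (A i j) (A i k) (A j k) x1 x2 x3 * d - NN1 x1 x2 x3 * KdD1 (A i j) (A i k) (A j k) x1 x2 x3)) + m12*(d * d * j21 - (KdN21 (A i j) (A i k) (A j k) x1 x2 x3 * d - NN2 x1 x2 x3 * KdD1 (A i j) (A i k) (A j k) x1 x2 x3)) + m13*(d * d * j31 - (KdN31 (A i j) (A i k) (A j k) x1 x2 x3 * d - NN3 x1 x2 x3 * KdD1 (A i j) (A i k) (A j k) x1 x2 x3))) + (d * (A i i * (d * y1 - NN1 x1 x2 x3) + A i j * (d * y2 - NN2 x1 x2 x3) + A i k * (d * y3 - NN3 x1 x2 x3)) + d * A i i * (d * y1 - NN1 x1 x2 x3)) + (((d)*(d) + (d)*((A i j)*(KN2 (A i j) (A i k) (A j k) x1 x2 x3) + (A i k)*(KN3 (A i j) (A i k) (A j k) x1 x2 x3)) + 0) - ((1 - ((A i j)*x2 + (A i k)*x3))*(KdN11 (A i j) (A i k) (A j k) x1 x2 x3 * (d) - (KN1 (A i j) (A i k) (A j k) x1 x2 x3) * KdD1 (A i j) (A i k) (A j k) x1 x2 x3) + (- x1*(A i j))*(KdN21 (A i j) (A i k) (A j k) x1 x2 x3 * (d) - (KN2 (A i j) (A i k) (A j k) x1 x2 x3) * KdD1 (A i j) (A i k) (A j k) x1 x2 x3) + (- x1*(A i k))*(KdN31 (A i j) (A i k) (A j k) x1 x2 x3 * (d) - (KN3 (A i j) (A i k) (A j k) x1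 x2 x3) * KdD1 (A i j) (A i k) (A j k) x1 x2 x3)))"
      unfolding r11_def m11_def m12_def m13_def by (simp only: Avals) algebra
    then have "d * d * (r11 - (m11*j11 + m12*j21 + m13*j31)) = 0" unfolding z1 z2 z3 by simp
    then show ?thesis using d0 by simp
  qed
  have R12: "r12 = m11*j12 + m12*j22 + m13*j32"
  proof -
    have KM: "(1 - ((A i j)*x2 + (A i k)*x3))*(KdN12 (A i j) (A i k) (A j k) x1 x2 x3 * (d) - (KN1 (A i j) (A i k) (A j k) x1 x2 x3) * KdD2 (A i j) (A i k) (A j k) x1 x2 x3) + (- x1*(A i j))*(KdN22 (A i j) (A i k) (A j k) x1 x2 x3 * (d) - (KN2 (A i j) (A i k) (A j k) x1 x2 x3) * KdD2 (A i j) (A i k) (A j k) x1 x2 x3) + (- x1*(A i k))*(KdN32 (A i j) (A i k) (A j k) x1 x2 x3 * (d) - (KN3 (A i j) (A i k) (A j k) x1 x2 x3) * KdD2 (A i j) (A i k) (A j k) x1 x2 x3) = (d)*(KN1 (A i j) (A i k) (A j k) x1 x2 x3)*(A i j)"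
      using KMJ(2)[where a="A i j" and b="A i k" and c="A j k" and xa=x1 and xb=x2 and xc=x3] unfolding d_def[symmetric] .
    have z1: "m11*(d * d * j12 - (KdN12 (A i j) (A i k) (A j k) x1 x2 x3 * d - NN1 x1 x2 x3 * KdD2 (A i j) (A i k) (A j k) x1 x2 x3)) + m12*(d * d * j22 - (KdN22 (A i j) (A i k) (A j k) x1 x2 x3 * d - NN2 x1 x2 x3 * KdD2 (A i j) (A i k) (A j k) x1 x2 x3)) + m13*(d * d * j32 - (KdN32 (A i j) (A i k) (A j k) x1 x2 x3 * d - NN3 x1 x2 x3 * KdD2 (A i j) (A i k) (A j k) x1 x2 x3)) = 0" by (simp add: jr)
    have z2: "d * A i j * (d * y1 - NN1 x1 x2 x3) = 0" by (simp add: yr)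
    have z3: "((d)*(KN1 (A i j) (A i k) (A j k) x1 x2 x3)*(A i j)) - ((1 - ((A i j)*x2 + (A i k)*x3))*(KdN12 (A i j) (A i k) (A j k) x1 x2 x3 * (d) - (KN1 (A i j) (A i k) (A j k) x1 x2 x3) * KdD2 (A i j) (A i k) (A j k) x1 x2 x3) + (- x1*(A i j))*(KdN22 (A i j) (A i k) (A j k) x1 x2 x3 * (d) - (KN2 (A i j) (A i k) (A j k) x1 x2 x3) * KdD2 (A i j) (A i k) (A j k) x1 x2 x3) + (- x1*(A i k))*(KdN32 (A i j) (A i k) (A j k) x1 x2 x3 * (d) - (KN3 (A i j) (A i k) (A j k) x1 x2 x3) * KdD2 (A i j) (A i k) (A j k) x1 x2 x3)) = 0" by (simp only: KM diff_self)
    have "d * d * (r12 - (m11*j12 + m12*j22 + m13*j32)) = - (m11*(d * d * j12 - (KdN12 (A i j) (A i k) (A j k) x1 x2 x3 * d - NN1 x1 x2 x3 * KdD2 (A i j) (A i k) (A j k) x1 x2 x3)) + m12*(d * d * j22 - (KdN22 (A i j) (A i k) (A j k) x1 x2 x3 * d - NN2 x1 x2 x3 * KdD2 (A i j) (A i k) (A j k) x1 x2 x3)) + m13*(d * d * j32 - (KdN32 (A i j) (A i k) (A j k) x1 x2 x3 * d - NN3 x1 x2 x3 * KdD2 (A i j) (A i k) (A j k) x1 x2 x3))) + (d * A i j * (d * y1 - NN1 x1 x2 x3)) + (((d)*(KN1 (A i j) (A i k) (A j k) x1 x2 x3)*(A i j)) - ((1 - ((A i j)*x2 + (A i k)*x3))*(KdN12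 (A i j) (A i k) (A j k) x1 x2 x3 * (d) - (KN1 (A i j) (A i k) (A j k) x1 x2 x3) * KdD2 (A i j) (A i k) (A j k) x1 x2 x3) + (- x1*(A i j))*(KdN22 (A i j) (A i k) (A j k) x1 x2 x3 * (d) - (KN2 (A i j) (A i k) (A j k) x1 x2 x3) * KdD2 (A i j) (A i k) (A j k) x1 x2 x3) + (- x1*(A i k))*(KdN32 (A i j) (A i k) (A j k) x1 x2 x3 * (d) - (KN3 (A i j) (A i k) (A j k) x1 x2 x3) * KdD2 (A i j) (A i k) (A j k) x1 x2 x3)))"
      unfolding r12_def m11_def m12_def m13_def by (simp only: Avals) algebra
    then have "d * d * (r12 - (m11*j12 + m12*j22 + m13*j32)) = 0" unfolding z1 z2 z3 by simp
    then show ?thesis using d0 by simp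
  qed
  have R13: "r13 = m11*j13 + m12*j23 + m13*j33"
  proof -
    have KM: "(1 - ((A i j)*x2 + (A i k)*x3))*(KdN13 (A i j) (A i k) (A j k) x1 x2 x3 * (d) - (KN1 (A i j) (A i k) (A j k) x1 x2 x3) * KdD3 (A i j) (A i k) (A j k) x1 x2 x3) + (- x1*(A i j))*(KdN23 (A i j) (A i k) (A j k) x1 x2 x3 * (d) - (KN2 (A i j) (A i k) (A j k) x1 x2 x3) * KdD3 (A i j) (A i k) (A j k) x1 x2 x3) + (- x1*(A i k))*(KdN33 (A i j) (A i k) (A j k) x1 x2 x3 * (d) - (KN3 (A i j) (A i k) (A j k) x1 x2 x3) * KdD3 (A i j) (A i k) (A j k) x1 x2 x3) = (d)*(KN1 (A i j) (A i k) (A j k) x1 x2 x3)*(A i k)"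
      using KMJ(3)[where a="A i j" and b="A i k" and c="A j k" and xa=x1 and xb=x2 and xc=x3] unfolding d_def[symmetric] .
    have z1: "m11*(d * d * j13 - (KdN13 (A i j) (A i k) (A j k) x1 x2 x3 * d - NN1 x1 x2 x3 * KdD3 (A i j) (A i k) (A j k) x1 x2 x3)) + m12*(d * d * j23 - (KdN23 (A i j) (A i k) (A j k) x1 x2 x3 * d - NN2 x1 x2 x3 * KdD3 (A i j) (A i k) (A j k) x1 x2 x3)) + m13*(d * d * j33 - (KdN33 (A i j) (A i k) (A j k) x1 x2 x3 * d - NN3 x1 x2 x3 * KdD3 (A i j) (A i k) (A j k) x1 x2 x3)) = 0" by (simp add: jr)
    have z2: "d * A i k * (d * y1 - NN1 x1 x2 x3) = 0" by (simp add: yr)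
    have z3: "((d)*(KN1 (A i j) (A i k) (A j k) x1 x2 x3)*(A i k)) - ((1 - ((A i j)*x2 + (A i k)*x3))*(KdN13 (A i j) (A i k) (A j k) x1 x2 x3 * (d) - (KN1 (A i j) (A i k) (A j k) x1 x2 x3) * KdD3 (A i j) (A i k) (A j k) x1 x2 x3) + (- x1*(A i j))*(KdN23 (A i j) (A i k) (A j k) x1 x2 x3 * (d) - (KN2 (A i j) (A i k) (A j k) x1 x2 x3) * KdD3 (A i j) (A i k) (A j k) x1 x2 x3) + (- x1*(A i k))*(KdN33 (A i j) (A i k) (A j k) x1 x2 x3 * (d) - (KN3 (A i j) (A i k) (A j k) x1 x2 x3) * KdD3 (A i j) (A i k) (A j k) x1 x2 x3)) = 0" by (simp only: KM diff_self)
    have "d * d * (r13 - (m11*j13 + m12*j23 + m13*j33)) = - (m11*(d * d * j13 - (KdN13 (A i j) (A i k) (A j k) x1 x2 x3 * d - NN1 x1 x2 x3 * KdD3 (A i j) (A i k) (A j k) x1 x2 x3)) + m12*(d * d * j23 - (KdN23 (A i j) (A i k) (A j k) x1 x2 x3 * d - NN2 x1 x2 x3 * KdD3 (A i j) (A i k) (A j k) x1 x2 x3)) + m13*(d * d * j33 - (KdN33 (A i j) (A i k) (A j k) x1 x2 x3 * d - NN3 x1 x2 x3 * KdD3 (A i j) (A i k) (A j k) x1 x2 x3))) + (d * A i k * (d * y1 - NN1 x1 x2 x3)) + (((d)*(KN1 (A i j) (A i k) (A j k) x1 x2 x3)*(A i k)) - ((1 - ((A i j)*x2 + (A i k)*x3))*(KdN13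 (A i j) (A i k) (A j k) x1 x2 x3 * (d) - (KN1 (A i j) (A i k) (A j k) x1 x2 x3) * KdD3 (A i j) (A i k) (A j k) x1 x2 x3) + (- x1*(A i j))*(KdN23 (A i j) (A i k) (A j k) x1 x2 x3 * (d) - (KN2 (A i j) (A i k) (A j k) x1 x2 x3) * KdD3 (A i j) (A i k) (A j k) x1 x2 x3) + (- x1*(A i k))*(KdN33 (A i j) (A i k) (A j k) x1 x2 x3 * (d) - (KN3 (A i j) (A i k) (A j k) x1 x2 x3) * KdD3 (A i j) (A i k) (A j k) x1 x2 x3)))"
      unfolding r13_def m11_def m12_def m13_def by (simp only: Avals) algebra
    then have "d * d * (r13 - (m11*j13 + m12*j23 + m13*j33)) = 0" unfolding z1 z2 z3 by simp
    then show ?thesis using d0 by simp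
  qed
  have R21: "r21 = m21*j11 + m22*j21 + m23*j31"
  proof -
    have KM: "(- x2*(-(A i j)))*(KdN11 (A i j) (A i k) (A j k) x1 x2 x3 * (d) - (KN1 (A i j) (A i k) (A j k) x1 x2 x3) * KdD1 (A i j) (A i k) (A j k) x1 x2 x3) + (1 - ((-(A i j))*x1 + (A j k)*x3))*(KdN21 (A i j) (A i k) (A j k) x1 x2 x3 * (d) - (KN2 (A i j) (A i k) (A j k) x1 x2 x3) * KdD1 (A i j) (A i k) (A j k) x1 x2 x3) + (- x2*(A j k))*(KdN31 (A i j) (A i k) (A j k) x1 x2 x3 * (d) - (KN3 (A i j) (A i k) (A j k) x1 x2 x3) * KdD1 (A i j) (A i k) (A j k) x1 x2 x3) = (d)*(KN2 (A i j) (A i k) (A j k) x1 x2 x3)*(-(A i j))"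
      using KMJ(4)[where a="A i j" and b="A i k" and c="A j k" and xa=x1 and xb=x2 and xc=x3] unfolding d_def[symmetric] .
    have z1: "m21*(d * d * j11 - (KdN11 (A i j) (A i k) (A j k) x1 x2 x3 * d - NN1 x1 x2 x3 * KdD1 (A i j) (A i k) (A j k) x1 x2 x3)) + m22*(d * d * j21 - (KdN21 (A i j) (A i k) (A j k) x1 x2 x3 * d - NN2 x1 x2 x3 * KdD1 (A i j) (A i k) (A j k) x1 x2 x3)) + m23*(d * d * j31 - (KdN31 (A i j) (A i k) (A j k) x1 x2 x3 * d - NN3 x1 x2 x3 * KdD1 (A i j) (A i k) (A j k) x1 x2 x3)) = 0" by (simp add: jr)
    have z2: "d * A j i * (d * y2 - NN2 x1 x2 x3) = 0" by (simp add: yr)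
    have z3: "((d)*(KN2 (A i j) (A i k) (A j k) x1 x2 x3)*(-(A i j))) - ((- x2*(-(A i j)))*(KdN11 (A i j) (A i k) (A j k) x1 x2 x3 * (d) - (KN1 (A i j) (A i k) (A j k) x1 x2 x3) * KdD1 (A i j) (A i k) (A j k) x1 x2 x3) + (1 - ((-(A i j))*x1 + (A j k)*x3))*(KdN21 (A i j) (A i k) (A j k) x1 x2 x3 * (d) - (KN2 (A i j) (A i k) (A j k) x1 x2 x3) * KdD1 (A i j) (A i k) (A j k) x1 x2 x3) + (- x2*(A j k))*(KdN31 (A i j) (A i k) (A j k) x1 x2 x3 * (d) - (KN3 (A i j) (A i k) (A j k) x1 x2 x3) * KdD1 (A i j) (A i k) (A j k) x1 x2 x3)) = 0" by (simp only: KM diff_self)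
    have "d * d * (r21 - (m21*j11 + m22*j21 + m23*j31)) = - (m21*(d * d * j11 - (KdN11 (A i j) (A i k) (A j k) x1 x2 x3 * d - NN1 x1 x2 x3 * KdD1 (A i j) (A i k) (A j k) x1 x2 x3)) + m22*(d * d * j21 - (KdN21 (A i j) (A i k) (A j k) x1 x2 x3 * d - NN2 x1 x2 x3 * KdD1 (A i j) (A i k) (A j k) x1 x2 x3)) + m23*(d * d * j31 - (KdN31 (A i j) (A i k) (A j k) x1 x2 x3 * d - NN3 x1 x2 x3 * KdD1 (A i j) (A i k) (A j k) x1 x2 x3))) + (d * A j i * (d * y2 - NN2 x1 x2 x3)) + (((d)*(KN2 (A i j) (A i k) (A j k) x1 x2 x3)*(-(A i j))) - ((- x2*(-(A i j)))*(KdN11 (A i j) (A i k) (A j k) x1 x2 x3 * (d) - (KN1 (A i j) (A i k) (A j k) x1 x2 x3) * KdD1 (A i j) (A i k) (A j k) x1 x2 x3) + (1 - ((-(A i j))*x1 + (A j k)*x3))*(KdN21 (A i j) (A i k) (A j k) x1 x2 x3 * (d) - (KN2 (A i j) (A i k) (A j k) x1 x2 x3) * KdD1 (A i j) (A i k) (A j k) x1 x2 x3) + (- x2*(A j k))*(KdN31 (A i j) (A i k) (A j k) x1 x2 x3 * (d) - (KN3 (A i j) (A i k) (A j k) x1 x2 x3) * KdD1 (A i j) (A i k) (A j k) x1 x2 x3)))"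
      unfolding r21_def m21_def m22_def m23_def by (simp only: Avals) algebra
    then have "d * d * (r21 - (m21*j11 + m22*j21 + m23*j31)) = 0" unfolding z1 z2 z3 by simp
    then show ?thesis using d0 by simp
  qed
  have R22: "r22 = m21*j12 + m22*j22 + m23*j32"
  proof -
    have KM: "(- x2*(-(A i j)))*(KdN12 (A i j) (A i k) (A j k) x1 x2 x3 * (d) - (KN1 (A i j) (A i k) (A j k) x1 x2 x3) * KdD2 (A i j) (A i k) (A j k) x1 x2 x3) + (1 - ((-(A i j))*x1 + (A j k)*x3))*(KdN22 (A i j) (A i k) (A j k) x1 x2 x3 * (d) - (KN2 (A i j) (A i k) (A j k) x1 x2 x3) * KdD2 (A i j) (A i k) (A j k) x1 x2 x3) + (- x2*(A j k))*(KdN32 (A i j) (A i k) (A j k) x1 x2 x3 * (d) - (KN3 (A i j) (A i k) (A j k) x1 x2 x3) * KdD2 (A i j) (A i k) (A j k) x1 x2 x3) = (d)*(d) + (d)*((-(A i j))*(KN1 (A i j) (A i k) (A j k) x1 x2 x3) + (A j k)*(KN3 (A i j) (A i k) (A j k) x1 x2 x3)) + 0"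
      using KMJ(5)[where a="A i j" and b="A i k" and c="A j k" and xa=x1 and xb=x2 and xc=x3] unfolding d_def[symmetric] .
    have z1: "m21*(d * d * j12 - (KdN12 (A i j) (A i k) (A j k) x1 x2 x3 * d - NN1 x1 x2 x3 * KdD2 (A i j) (A i k) (A j k) x1 x2 x3)) + m22*(d * d * j22 - (KdN22 (A i j) (A i k) (A j k) x1 x2 x3 * d - NN2 x1 x2 x3 * KdD2 (A i j) (A i k) (A j k) x1 x2 x3)) + m23*(d * d * j32 - (KdN32 (A i j) (A i k) (A j k) x1 x2 x3 * d - NN3 x1 x2 x3 * KdD2 (A i j) (A i k) (A j k) x1 x2 x3)) = 0" by (simp add: jr)
    have z2: "d * (A j i * (d * y1 - NN1 x1 x2 x3) + A j j * (d * y2 - NN2 x1 x2 x3) + A j k * (d * y3 - NN3 x1 x2 x3)) + d * A j j * (d * y2 - NN2 x1 x2 x3) = 0" by (simp add: yr)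
    have z3: "((d)*(d) + (d)*((-(A i j))*(KN1 (A i j) (A i k) (A j k) x1 x2 x3) + (A j k)*(KN3 (A i j) (A i k) (A j k) x1 x2 x3)) + 0) - ((- x2*(-(A i j)))*(KdN12 (A i j) (A i k) (A j k) x1 x2 x3 * (d) - (KN1 (A i j) (A i k) (A j k) x1 x2 x3) * KdD2 (A i j) (A i k) (A j k) x1 x2 x3) + (1 - ((-(A i j))*x1 + (A j k)*x3))*(KdN22 (A i j) (A i k) (A j k) x1 x2 x3 * (d) - (KN2 (A i j) (A i k) (A j k) x1 x2 x3) * KdD2 (A i j) (A i k) (A j k) x1 x2 x3) + (- x2*(A j k))*(KdN32 (A i j) (A i k) (A j k) x1 x2 x3 * (d) - (KN3 (A i j) (A i k) (A j k) x1 x2 x3) * KdD2 (A i j) (A i k) (A j k) x1 x2 x3)) = 0" by (simp only: KM diff_self)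
    have "d * d * (r22 - (m21*j12 + m22*j22 + m23*j32)) = - (m21*(d * d * j12 - (KdN12 (A i j) (A i k) (A j k) x1 x2 x3 * d - NN1 x1 x2 x3 * KdD2 (A i j) (A i k) (A j k) x1 x2 x3)) + m22*(d * d * j22 - (KdN22 (A i j) (A i k) (A j k) x1 x2 x3 * d - NN2 x1 x2 x3 * KdD2 (A i j) (A i k) (A j k) x1 x2 x3)) + m23*(d * d * j32 - (KdN32 (A i j) (A i k) (A j k) x1 x2 x3 * d - NN3 x1 x2 x3 * KdD2 (A i j) (A i k) (A j k) x1 x2 x3))) + (d * (A j i * (d * y1 - NN1 x1 x2 x3) + A j j * (d * y2 - NN2 x1 x2 x3) + A j k * (d * y3 - NN3 x1 x2 x3)) + d * A j j * (d * y2 - NN2 x1 x2 x3)) + (((d)*(d) + (d)*((-(A i j))*(KN1 (A i j) (A i k) (A j k) x1 x2 x3) + (A j k)*(KN3 (A i j) (A i k) (A j k) x1 x2 x3)) + 0) - ((- x2*(-(A i j)))*(KdN12 (A i j) (A i k) (A j k) x1 x2 x3 * (d) - (KN1 (A i j) (A i k) (A j k) x1 x2 x3) * KdD2 (A i j) (A i k) (A j k) x1 x2 x3) + (1 - ((-(A i j))*x1 + (A j k)*x3))*(KdN22 (A i j) (A i k) (A j k) x1 x2 x3 * (d) - (KN2 (A i j) (A i k) (A j k) x1 x2 x3) * KdD2 (A i j) (A i k) (A j k) x1 x2 x3) + (- x2*(A j k))*(KdN32 (A i j) (A i k) (A j k) x1 x2 x3 * (d) - (KN3 (A i j) (A i k)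 (A j k) x1 x2 x3) * KdD2 (A i j) (A i k) (A j k) x1 x2 x3)))"
      unfolding r22_def m21_def m22_def m23_def by (simp only: Avals) algebra
    then have "d * d * (r22 - (m21*j12 + m22*j22 + m23*j32)) = 0" unfolding z1 z2 z3 by simp
    then show ?thesis using d0 by simp
  qed
  have R23: "r23 = m21*j13 + m22*j23 + m23*j33"
  proof -
    have KM: "(- x2*(-(A i j)))*(KdN13 (A i j) (A i k) (A j k) x1 x2 x3 * (d) - (KN1 (A i j) (A i k) (A j k) x1 x2 x3) * KdD3 (A i j) (A i k) (A j k) x1 x2 x3) + (1 - ((-(A i j))*x1 + (A j k)*x3))*(KdN23 (A i j) (A i k) (A j k) x1 x2 x3 * (d) - (KN2 (A i j) (A i k) (A j k) x1 x2 x3) * KdD3 (A i j) (A i k) (A j k) x1 x2 x3) + (- x2*(A j k))*(KdN33 (A i j) (A i k) (A j k) x1 x2 x3 * (d) - (KN3 (A i j) (A i k) (A j k) x1 x2 x3) * KdD3 (A i j) (A i k) (A j k) x1 x2 x3) = (d)*(KN2 (A i j) (A i k) (A j k) x1 x2 x3)*(A j k)"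
      using KMJ(6)[where a="A i j" and b="A i k" and c="A j k" and xa=x1 and xb=x2 and xc=x3] unfolding d_def[symmetric] .
    have z1: "m21*(d * d * j13 - (KdN13 (A i j) (A i k) (A j k) x1 x2 x3 * d - NN1 x1 x2 x3 * KdD3 (A i j) (A i k) (A j k) x1 x2 x3)) + m22*(d * d * j23 - (KdN23 (A i j) (A i k) (A j k) x1 x2 x3 * d - NN2 x1 x2 x3 * KdD3 (A i j) (A i k) (A j k) x1 x2 x3)) + m23*(d * d * j33 - (KdN33 (A i j) (A i k) (A j k) x1 x2 x3 * d - NN3 x1 x2 x3 * KdD3 (A i j) (A i k) (A j k) x1 x2 x3)) = 0" by (simp add: jr)
    have z2: "d * A j k * (d * y2 - NN2 x1 x2 x3) = 0" by (simp add: yr)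
    have z3: "((d)*(KN2 (A i j) (A i k) (A j k) x1 x2 x3)*(A j k)) - ((- x2*(-(A i j)))*(KdN13 (A i j) (A i k) (A j k) x1 x2 x3 * (d) - (KN1 (A i j) (A i k) (A j k) x1 x2 x3) * KdD3 (A i j) (A i k) (A j k) x1 x2 x3) + (1 - ((-(A i j))*x1 + (A j k)*x3))*(KdN23 (A i j) (A i k) (A j k) x1 x2 x3 * (d) - (KN2 (A i j) (A i k) (A j k) x1 x2 x3) * KdD3 (A i j) (A i k) (A j k) x1 x2 x3) + (- x2*(A j k))*(KdN33 (A i j) (A i k) (A j k) x1 x2 x3 * (d) - (KN3 (A i j) (A i k) (A j k) x1 x2 x3) * KdD3 (A i j) (A i k) (A j k) x1 x2 x3)) = 0" by (simp only: KM diff_self)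
    have "d * d * (r23 - (m21*j13 + m22*j23 + m23*j33)) = - (m21*(d * d * j13 - (KdN13 (A i j) (A i k) (A j k) x1 x2 x3 * d - NN1 x1 x2 x3 * KdD3 (A i j) (A i k) (A j k) x1 x2 x3)) + m22*(d * d * j23 - (KdN23 (A i j) (A i k) (A j k) x1 x2 x3 * d - NN2 x1 x2 x3 * KdD3 (A i j) (A i k) (A j k) x1 x2 x3)) + m23*(d * d * j33 - (KdN33 (A i j) (A i k) (A j k) x1 x2 x3 * d - NN3 x1 x2 x3 * KdD3 (A i j) (A i k) (A j k) x1 x2 x3))) + (d * A j k * (d * y2 - NN2 x1 x2 x3)) + (((d)*(KN2 (A i j) (A i k) (A j k) x1 x2 x3)*(A j k)) - ((- x2*(-(A i j)))*(KdN13 (A i j) (A i k) (A j k) x1 x2 x3 * (d) - (KN1 (A i j) (A i k) (A j k) x1 x2 x3) * KdD3 (A i j) (A i k) (A j k) x1 x2 x3) + (1 - ((-(A i j))*x1 + (A j k)*x3))*(KdN23 (A i j) (A i k) (A j k) x1 x2 x3 * (d) - (KN2 (A i j) (A i k) (A j k) x1 x2 x3) * KdD3 (A i j) (A i k) (A j k) x1 x2 x3) + (- x2*(A j k))*(KdN33 (A i j) (A i k) (A j k) x1 x2 x3 * (d) - (KN3 (A i j) (A i k) (A j k) x1 x2 x3) * KdD3 (A i j) (A i k) (A j k) x1 x2 x3)))"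
      unfolding r23_def m21_def m22_def m23_def by (simp only: Avals) algebra
    then have "d * d * (r23 - (m21*j13 + m22*j23 + m23*j33)) = 0" unfolding z1 z2 z3 by simp
    then show ?thesis using d0 by simp
  qed
  have R31: "r31 = m31*j11 + m32*j21 + m33*j31"
  proof -
    have KM: "(- x3*(-(A i k)))*(KdN11 (A i j) (A i k) (A j k) x1 x2 x3 * (d) - (KN1 (A i j) (A i k) (A j k) x1 x2 x3) * KdD1 (A i j) (A i k) (A j k) x1 x2 x3) + (- x3*(-(A j k)))*(KdN21 (A i j) (A i k) (A j k) x1 x2 x3 * (d) - (KN2 (A i j) (A i k) (A j k) x1 x2 x3) * KdD1 (A i j) (A i k) (A j k) x1 x2 x3) + (1 - ((-(A i k))*x1 + (-(A j k))*x2))*(KdN31 (A i j) (A i k) (A j k) x1 x2 x3 * (d) - (KN3 (A i j) (A i k) (A j k) x1 x2 x3) * KdD1 (A i j) (A i k) (A j k) x1 x2 x3) = (d)*(KN3 (A i j) (A i k) (A j k) x1 x2 x3)*(-(A i k))"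
      using KMJ(7)[where a="A i j" and b="A i k" and c="A j k" and xa=x1 and xb=x2 and xc=x3] unfolding d_def[symmetric] .
    have z1: "m31*(d * d * j11 - (KdN11 (A i j) (A i k) (A j k) x1 x2 x3 * d - NN1 x1 x2 x3 * KdD1 (A i j) (A i k) (A j k) x1 x2 x3)) + m32*(d * d * j21 - (KdN21 (A i j) (A i k) (A j k) x1 x2 x3 * d - NN2 x1 x2 x3 * KdD1 (A i j) (A i k) (A j k) x1 x2 x3)) + m33*(d * d * j31 - (KdN31 (A i j) (A i k) (A j k) x1 x2 x3 * d - NN3 x1 x2 x3 * KdD1 (A i j) (A i k) (A j k) x1 x2 x3)) = 0" by (simp add: jr)
    have z2: "d * A k i * (d * y3 - NN3 x1 x2 x3) = 0" by (simp add: yr)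
    have z3: "((d)*(KN3 (A i j) (A i k) (A j k) x1 x2 x3)*(-(A i k))) - ((- x3*(-(A i k)))*(KdN11 (A i j) (A i k) (A j k) x1 x2 x3 * (d) - (KN1 (A i j) (A i k) (A j k) x1 x2 x3) * KdD1 (A i j) (A i k) (A j k) x1 x2 x3) + (- x3*(-(A j k)))*(KdN21 (A i j) (A i k) (A j k) x1 x2 x3 * (d) - (KN2 (A i j) (A i k) (A j k) x1 x2 x3) * KdD1 (A i j) (A i k) (A j k) x1 x2 x3) + (1 - ((-(A i k))*x1 + (-(A j k))*x2))*(KdN31 (A i j) (A i k) (A j k) x1 x2 x3 * (d) - (KN3 (A i j) (A i k) (A j k) x1 x2 x3) * KdD1 (A i j) (A i k) (A j k) x1 x2 x3)) = 0" by (simp only: KM diff_self)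
    have "d * d * (r31 - (m31*j11 + m32*j21 + m33*j31)) = - (m31*(d * d * j11 - (KdN11 (A i j) (A i k) (A j k) x1 x2 x3 * d - NN1 x1 x2 x3 * KdD1 (A i j) (A i k) (A j k) x1 x2 x3)) + m32*(d * d * j21 - (KdN21 (A i j) (A i k) (A j k) x1 x2 x3 * d - NN2 x1 x2 x3 * KdD1 (A i j) (A i k) (A j k) x1 x2 x3)) + m33*(d * d * j31 - (KdN31 (A i j) (A i k) (A j k) x1 x2 x3 * d - NN3 x1 x2 x3 * KdD1 (A i j) (A i k) (A j k) x1 x2 x3))) + (d * A k i * (d * y3 - NN3 x1 x2 x3)) + (((d)*(KN3 (A i j) (A i k) (A j k) x1 x2 x3)*(-(A i k))) - ((- x3*(-(A i k)))*(KdN11 (A i j) (A i k) (A j k) x1 x2 x3 * (d) - (KN1 (A i j) (A i k) (A j k) x1 x2 x3) * KdD1 (A i j) (A i k) (A j k) x1 x2 x3) + (- x3*(-(A j k)))*(KdN21 (A i j) (A i k) (A j k) x1 x2 x3 * (d) - (KN2 (A i j) (A i k) (A j k) x1 x2 x3) * KdD1 (A i j) (A i k) (A j k) x1 x2 x3) + (1 - ((-(A i k))*x1 + (-(A j k))*x2))*(KdN31 (A i j) (A i k) (A j k) x1 x2 x3 * (d) - (KN3 (A i j) (A i k) (A j k) x1 x2 x3) * KdD1 (A i j) (A i k) (A j k) x1 x2 x3)))"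
      unfolding r31_def m31_def m32_def m33_def by (simp only: Avals) algebra
    then have "d * d * (r31 - (m31*j11 + m32*j21 + m33*j31)) = 0" unfolding z1 z2 z3 by simp
    then show ?thesis using d0 by simp
  qed
  have R32: "r32 = m31*j12 + m32*j22 + m33*j32"
  proof -
    have KM: "(- x3*(-(A i k)))*(KdN12 (A i j) (A i k) (A j k) x1 x2 x3 * (d) - (KN1 (A i j) (A i k) (A j k) x1 x2 x3) * KdD2 (A i j) (A i k) (A j k) x1 x2 x3) + (- x3*(-(A j k)))*(KdN22 (A i j) (A i k) (A j k) x1 x2 x3 * (d) - (KN2 (A i j) (A i k) (A j k) x1 x2 x3) * KdD2 (A i j) (A i k) (A j k) x1 x2 x3) + (1 - ((-(A i k))*x1 + (-(A j k))*x2))*(KdN32 (A i j) (A i k) (A j k) x1 x2 x3 * (d) - (KN3 (A i j) (A i k) (A j k) x1 x2 x3) * KdD2 (A i j) (A i k) (A j k) x1 x2 x3) = (d)*(KN3 (A i j) (A i k) (A j k) x1 x2 x3)*(-(A j k))"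
      using KMJ(8)[where a="A i j" and b="A i k" and c="A j k" and xa=x1 and xb=x2 and xc=x3] unfolding d_def[symmetric] .
    have z1: "m31*(d * d * j12 - (KdN12 (A i j) (A i k) (A j k) x1 x2 x3 * d - NN1 x1 x2 x3 * KdD2 (A i j) (A i k) (A j k) x1 x2 x3)) + m32*(d * d * j22 - (KdN22 (A i j) (A i k) (A j k) x1 x2 x3 * d - NN2 x1 x2 x3 * KdD2 (A i j) (A i k) (A j k) x1 x2 x3)) + m33*(d * d * j32 - (KdN32 (A i j) (A i k) (A j k) x1 x2 x3 * d - NN3 x1 x2 x3 * KdD2 (A i j) (A i k) (A j k) x1 x2 x3)) = 0" by (simp add: jr)
    have z2: "d * A k j * (d * y3 - NN3 x1 x2 x3) = 0" by (simp add: yr)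
    have z3: "((d)*(KN3 (A i j) (A i k) (A j k) x1 x2 x3)*(-(A j k))) - ((- x3*(-(A i k)))*(KdN12 (A i j) (A i k) (A j k) x1 x2 x3 * (d) - (KN1 (A i j) (A i k) (A j k) x1 x2 x3) * KdD2 (A i j) (A i k) (A j k) x1 x2 x3) + (- x3*(-(A j k)))*(KdN22 (A i j) (A i k) (A j k) x1 x2 x3 * (d) - (KN2 (A i j) (A i k) (A j k) x1 x2 x3) * KdD2 (A i j) (A i k) (A j k) x1 x2 x3) + (1 - ((-(A i k))*x1 + (-(A j k))*x2))*(KdN32 (A i j) (A i k) (A j k) x1 x2 x3 * (d) - (KN3 (A i j) (A i k) (A j k) x1 x2 x3) * KdD2 (A i j) (A i k) (A j k) x1 x2 x3)) = 0" by (simp only: KM diff_self)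
    have "d * d * (r32 - (m31*j12 + m32*j22 + m33*j32)) = - (m31*(d * d * j12 - (KdN12 (A i j) (A i k) (A j k) x1 x2 x3 * d - NN1 x1 x2 x3 * KdD2 (A i j) (A i k) (A j k) x1 x2 x3)) + m32*(d * d * j22 - (KdN22 (A i j) (A i k) (A j k) x1 x2 x3 * d - NN2 x1 x2 x3 * KdD2 (A i j) (A i k) (A j k) x1 x2 x3)) + m33*(d * d * j32 - (KdN32 (A i j) (A i k) (A j k) x1 x2 x3 * d - NN3 x1 x2 x3 * KdD2 (A i j) (A i k) (A j k) x1 x2 x3))) + (d * A k j * (d * y3 - NN3 x1 x2 x3)) + (((d)*(KN3 (A i j) (A i k) (A j k) x1 x2 x3)*(-(A j k))) - ((- x3*(-(A i k)))*(KdN12 (A i j) (A i k) (A j k) x1 x2 x3 * (d) - (KN1 (A i j) (A i k) (A j k) x1 x2 x3) * KdD2 (A i j) (A i k) (A j k) x1 x2 x3) + (- x3*(-(A j k)))*(KdN22 (A i j) (A i k) (A j k) x1 x2 x3 * (d) - (KN2 (A i j) (A i k) (A j k) x1 x2 x3) * KdD2 (A i j) (A i k) (A j k) x1 x2 x3) + (1 - ((-(A i k))*x1 + (-(A j k))*x2))*(KdN32 (A i j) (A i k) (A j k) x1 x2 x3 * (d) - (KN3 (A i j) (A i k) (A j k) x1 x2 x3) * KdD2 (A i j) (A i k) (A j k) x1 x2 x3)))"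
      unfolding r32_def m31_def m32_def m33_def by (simp only: Avals) algebra
    then have "d * d * (r32 - (m31*j12 + m32*j22 + m33*j32)) = 0" unfolding z1 z2 z3 by simp
    then show ?thesis using d0 by simp
  qed
  have R33: "r33 = m31*j13 + m32*j23 + m33*j33"
  proof -
    have KM: "(- x3*(-(A i k)))*(KdN13 (A i j) (A i k) (A j k) x1 x2 x3 * (d) - (KN1 (A i j) (A i k) (A j k) x1 x2 x3) * KdD3 (A i j) (A i k) (A j k) x1 x2 x3) + (- x3*(-(A j k)))*(KdN23 (A i j) (A i k) (A j k) x1 x2 x3 * (d) - (KN2 (A i j) (A i k) (A j k) x1 x2 x3) * KdD3 (A i j) (A i k) (A j k) x1 x2 x3) + (1 - ((-(A i k))*x1 + (-(A j k))*x2))*(KdN33 (A i j) (A i k) (A j k) x1 x2 x3 * (d) - (KN3 (A i j) (A i k) (A j k) x1 x2 x3) * KdD3 (A i j) (A i k) (A j k) x1 x2 x3) = (d)*(d) + (d)*((-(A i k))*(KN1 (A i j) (A i k) (A j k) x1 x2 x3) + (-(A j k))*(KN2 (A i j) (A i k) (A j k) x1 x2 x3)) + 0"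
      using KMJ(9)[where a="A i j" and b="A i k" and c="A j k" and xa=x1 and xb=x2 and xc=x3] unfolding d_def[symmetric] .
    have z1: "m31*(d * d * j13 - (KdN13 (A i j) (A i k) (A j k) x1 x2 x3 * d - NN1 x1 x2 x3 * KdD3 (A i j) (A i k) (A j k) x1 x2 x3)) + m32*(d * d * j23 - (KdN23 (A i j) (A i k) (A j k) x1 x2 x3 * d - NN2 x1 x2 x3 * KdD3 (A i j) (A i k) (A j k) x1 x2 x3)) + m33*(d * d * j33 - (KdN33 (A i j) (A i k) (A j k) x1 x2 x3 * d - NN3 x1 x2 x3 * KdD3 (A i j) (A i k) (A j k) x1 x2 x3)) = 0" by (simp add: jr)
    have z2: "d * (A k i * (d * y1 - NN1 x1 x2 x3) + A k j * (d * y2 - NN2 x1 x2 x3) + A k k * (d * y3 - NN3 x1 x2 x3)) + d * A k k * (d * y3 - NN3 x1 x2 x3) = 0" by (simp add: yr)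
    have z3: "((d)*(d) + (d)*((-(A i k))*(KN1 (A i j) (A i k) (A j k) x1 x2 x3) + (-(A j k))*(KN2 (A i j) (A i k) (A j k) x1 x2 x3)) + 0) - ((- x3*(-(A i k)))*(KdN13 (A i j) (A i k) (A j k) x1 x2 x3 * (d) - (KN1 (A i j) (A i k) (A j k) x1 x2 x3) * KdD3 (A i j) (A i k) (A j k) x1 x2 x3) + (- x3*(-(A j k)))*(KdN23 (A i j) (A i k) (A j k) x1 x2 x3 * (d) - (KN2 (A i j) (A i k) (A j k) x1 x2 x3) * KdD3 (A i j) (A i k) (A j k) x1 x2 x3) + (1 - ((-(A i k))*x1 + (-(A j k))*x2))*(KdN33 (A i j) (A i k) (A j k) x1 x2 x3 * (d) - (KN3 (A i j) (A i k) (A j k) x1 x2 x3) * KdD3 (A i j) (A i k) (A j k) x1 x2 x3)) = 0" by (simp only: KM diff_self)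
    have "d * d * (r33 - (m31*j13 + m32*j23 + m33*j33)) = - (m31*(d * d * j13 - (KdN13 (A i j) (A i k) (A j k) x1 x2 x3 * d - NN1 x1 x2 x3 * KdD3 (A i j) (A i k) (A j k) x1 x2 x3)) + m32*(d * d * j23 - (KdN23 (A i j) (A i k) (A j k) x1 x2 x3 * d - NN2 x1 x2 x3 * KdD3 (A i j) (A i k) (A j k) x1 x2 x3)) + m33*(d * d * j33 - (KdN33 (A i j) (A i k) (A j k) x1 x2 x3 * d - NN3 x1 x2 x3 * KdD3 (A i j) (A i k) (A j k) x1 x2 x3))) + (d * (A k i * (d * y1 - NN1 x1 x2 x3) + A k j * (d * y2 - NN2 x1 x2 x3) + A k k * (d * y3 - NN3 x1 x2 x3)) + d * A k k * (d * y3 - NN3 x1 x2 x3)) + (((d)*(d) + (d)*((-(A i k))*(KN1 (A i j) (A i k) (A j k) x1 x2 x3) + (-(A j k))*(KN2 (A i j) (A i k) (A j k) x1 x2 x3)) + 0) - ((- x3*(-(A i k)))*(KdN13 (A i j) (A i k) (A j k) x1 x2 x3 * (d) - (KN1 (A i j) (A i k) (A j k) x1 x2 x3) * KdD3 (A i j) (A i k) (A j k) x1 x2 x3) + (- x3*(-(A j k)))*(KdN23 (A i j) (A i k) (A j k) x1 x2 x3 * (d) - (KN2 (A i j) (A i k) (A j k) x1 x2 x3) * KdD3 (A i j) (A i k) (A j k) x1 x2 x3) + (1 - ((-(A i k))*x1 + (-(A j k))*x2))*(KdN33 (A i j) (A i k) (A j k) x1 x2 x3 * (d) - (KN3 (A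 i j) (A i k) (A j k) x1 x2 x3) * KdD3 (A i j) (A i k) (A j k) x1 x2 x3)))"
      unfolding r33_def m31_def m32_def m33_def by (simp only: Avals) algebra
    then have "d * d * (r33 - (m31*j13 + m32*j23 + m33*j33)) = 0" unfolding z1 z2 z3 by simp
    then show ?thesis using d0 by simp
  qed
  have C: "r11*p11*r21 + r11*p12*r22 + r11*p13*r23 + r12*p21*r21 + r12*p22*r22 + r12*p23*r23 + r13*p31*r21 + r13*p32*r22 + r13*p33*r23 = m11*q11*m21 + m11*q12*m22 + m11*q13*m23 + m12*q21*m21 + m12*q22*m22 + m12*q23*m23 + m13*q31*m21 + m13*q32*m22 + m13*q33*m23"
    by (rule core0[OF R11 R12 R13 R21 R22 R23 R31 R32 R33 B11 B12 B13 B21 B22 B23 B31 B32 B33])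
  have P1: "KPhi (A i j) (A i k) (A j k) x1 x2 x3 y1 y2 y3 1 = 0"
    using C unfolding KPhi_def m11_def m12_def m13_def m21_def m22_def m23_def m31_def m32_def m33_def r11_def r12_def r13_def r21_def r22_def r23_def r31_def r32_def r33_def p11_def p12_def p13_def p21_def p22_def p23_def p31_def p32_def p33_def q11_def q12_def q13_def q21_def q22_def q23_def q31_def q32_def q33_def
    by (simp only: Avals) algebra
  have "KPhi (A i j) (A i k) (A j k) x1 x2 x3 (d * y1) (d * y2) (d * y3) d = d^2 * KPhi (A i j) (A i k) (A j k) x1 x2 x3 y1 y2 y3 1"
    by (rule Khomog)
  then have "KPhi (A i j) (A i k) (A j k) x1 x2 x3 (NN1 x1 x2 x3) (NN2 x1 x2 x3) (NN3 x1 x2 x3) d = 0"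
    unfolding yr P1 by simp
  then show ?thesis using KPhiF[where a="A i j" and b="A i k" and c="A j k" and xa=x1 and xb=x2 and xc=x3] unfolding d_def by simp
qed

end
context tri
begin

lemma evc1: "eventually (\<lambda>s. dm (s^2) (s^2) s) (at 0)"
proof -
  have D: "eventually (\<lambda>s. DD (s^2) (s^2) s \<noteq> 0) (at 0)"
  proof (rule tendsto_imp_eventually_ne)
    show "((\<lambda>s. DD (s^2) (s^2) s) \<longlongrightarrow> DD (0^2) (0^2) 0) (at 0)" unfolding KD_def by (intro tendsto_intros)
    show "DD (0^2) (0^2) 0 \<noteq> 0" by (simp add: KD_def)
  qed
  have U: "eventually (\<lambda>s. \<forall>m. m \<notin> {i,j,k} \<longrightarrow> uo m (s^2) (s^2) s \<noteq> 1) (at 0)"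
  proof (rule eventually_all_finite)
    fix m
    have "eventually (\<lambda>s. uo m (s^2) (s^2) s \<noteq> 1) (at 0)"
    proof (rule tendsto_imp_eventually_ne)
      show "((\<lambda>s. uo m (s^2) (s^2) s) \<longlongrightarrow> uo m (0^2) (0^2) 0) (at 0)" unfolding uo_def by (intro tendsto_intros)
      show "uo m (0^2) (0^2) 0 \<noteq> 1" by (simp add: uo_def)
    qed
    then show "eventually (\<lambda>s. m \<notin> {i,j,k} \<longrightarrow> uo m (s^2) (s^2) s \<noteq> 1) (at 0)" by (rule eventually_mono) simp
  qed
  show ?thesis using eventually_conj[OF D U] by (simp add: dm_def)
qed

lemma evc2: "eventually (\<lambda>s. dm s (s^2) (s^2)) (at 0)"
proof -
  have D: "eventually (\<lambda>s. DD s (s^2) (s^2) \<noteq> 0) (at 0)"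
  proof (rule tendsto_imp_eventually_ne)
    show "((\<lambda>s. DD s (s^2) (s^2)) \<longlongrightarrow> DD 0 (0^2) (0^2)) (at 0)" unfolding KD_def by (intro tendsto_intros)
    show "DD 0 (0^2) (0^2) \<noteq> 0" by (simp add: KD_def)
  qed
  have U: "eventually (\<lambda>s. \<forall>m. m \<notin> {i,j,k} \<longrightarrow> uo m s (s^2) (s^2) \<noteq> 1) (at 0)"
  proof (rule eventually_all_finite)
    fix m
    have "eventually (\<lambda>s. uo m s (s^2) (s^2) \<noteq> 1) (at 0)"
    proof (rule tendsto_imp_eventually_ne)
      show "((\<lambda>s. uo m s (s^2) (s^2)) \<longlongrightarrow> uo m 0 (0^2) (0^2)) (at 0)" unfolding uo_def by (intro tendsto_intros)
      show "uo m 0 (0^2) (0^2) \<noteq> 1" by (simp add: uo_def)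
    qed
    then show "eventually (\<lambda>s. m \<notin> {i,j,k} \<longrightarrow> uo m s (s^2) (s^2) \<noteq> 1) (at 0)" by (rule eventually_mono) simp
  qed
  show ?thesis using eventually_conj[OF D U] by (simp add: dm_def)
qed

lemma C1:
  assumes KP: "kahan_poisson A"
  shows "KC1 (A i j) (A i k) (A j k) = 0"
proof -
  have ev: "eventually (\<lambda>s. KC1 (A i j) (A i k) (A j k) + s * KH1 (A i j) (A i k) (A j k) s = 0) (at 0)"
  proof -
    have "eventually (\<lambda>s. s \<noteq> 0) (at (0::'a))" by (simp add: eventually_at_filter)
    then show ?thesis using evc1
    proof eventually_elim
      case (elim s)
      have "KF (A i j) (A i k) (A j k) (s^2) (s^2) s = 0" by (rule KF_zero[OF KP elim(2)])
      then have "s^7 * (KC1 (A i j) (A i k) (A j k) + s * KH1 (A i j) (A i k) (A j k) s) = 0"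
        by (simp only: Kcurve)
      then show ?case using elim(1) by simp
    qed
  qed
  have l1: "((\<lambda>s. KC1 (A i j) (A i k) (A j k) + s * KH1 (A i j) (A i k) (A j k) s) \<longlongrightarrow>
      KC1 (A i j) (A i k) (A j k) + 0 * KH1 (A i j) (A i k) (A j k) 0) (at 0)"
    unfolding KH1_def by (intro tendsto_intros)
  have l2: "((\<lambda>s. KC1 (A i j) (A i k) (A j k) + s * KH1 (A i j) (A i k) (A j k) s) \<longlongrightarrow> 0) (at 0)"
    by (rule tendsto_eventually[OF ev])
  have nb: "at (0::'a) \<noteq> bot" by simp
  have "KC1 (A i j) (A i k) (A j k) + 0 * KH1 (A i j) (A i k) (A j k) 0 = 0"
    by (rule tendsto_unique[OF nb l1 l2])
  then show ?thesis by simp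
qed

lemma C2:
  assumes KP: "kahan_poisson A"
  shows "KC2 (A i j) (A i k) (A j k) = 0"
proof -
  have ev: "eventually (\<lambda>s. KC2 (A i j) (A i k) (A j k) + s * KH2 (A i j) (A i k) (A j k) s = 0) (at 0)"
  proof -
    have "eventually (\<lambda>s. s \<noteq> 0) (at (0::'a))" by (simp add: eventually_at_filter)
    then show ?thesis using evc2
    proof eventually_elim
      case (elim s)
      have "KF (A i j) (A i k) (A j k) s (s^2) (s^2) = 0" by (rule KF_zero[OF KP elim(2)])
      then have "s^7 * (KC2 (A i j) (A i k) (A j k) + s * KH2 (A i j) (A i k) (A j k) s) = 0"
        by (simp only: Kcurve)
      then show ?case using elim(1) by simp
    qed
  qed
  have l1: "((\<lambda>s. KC2 (A i j) (A i k) (A j k) + s * KH2 (A i j) (A i k) (A j k) s) \<longlongrightarrow>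
      KC2 (A i j) (A i k) (A j k) + 0 * KH2 (A i j) (A i k) (A j k) 0) (at 0)"
    unfolding KH2_def by (intro tendsto_intros)
  have l2: "((\<lambda>s. KC2 (A i j) (A i k) (A j k) + s * KH2 (A i j) (A i k) (A j k) s) \<longlongrightarrow> 0) (at 0)"
    by (rule tendsto_eventually[OF ev])
  have nb: "at (0::'a) \<noteq> bot" by simp
  have "KC2 (A i j) (A i k) (A j k) + 0 * KH2 (A i j) (A i k) (A j k) 0 = 0"
    by (rule tendsto_unique[OF nb l1 l2])
  then show ?thesis by simp
qed

end

lemma skew_diag:
  fixes A :: "'n \<Rightarrow> 'n \<Rightarrow> 'a::real_normed_field"
  assumes "skew_symmetric A"
  shows "A p p = 0"
proof -
  have "A p p = - A p p" using assms unfolding skew_symmetric_def by blast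
  then show ?thesis by simp
qed

lemma adj:
  fixes A :: "'n::finite \<Rightarrow> 'n \<Rightarrow> 'a::real_normed_field"
  assumes sk: "skew_symmetric A" and KP: "kahan_poisson A" and a: "A i j \<noteq> 0" and b: "A i k \<noteq> 0"
  shows "(A i j)^2 = (A i k)^2"
proof (cases "j = k")
  case True then show ?thesis by simp
next
  case False
  have ij: "i \<noteq> j" using a skew_diag[OF sk] by auto
  have ik: "i \<noteq> k" using b skew_diag[OF sk] by auto
  interpret t1: tri A i j k using sk ij ik False by unfold_locales
  interpret t2: tri A i k j using sk ij ik False by unfold_locales auto
  have e1: "KC1 (A i j) (A i k) (A j k) = 0" by (rule t1.C1[OF KP])
  have e2: "KC2 (A i j) (A i k) (A j k) = 0" by (rule t1.C2[OF KP])
  have e3: "KC1 (A i k) (A i j) (A k j) = 0" by (rule t2.C1[OF KP])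
  have akj: "A k j = - A j k" using sk unfolding skew_symmetric_def by blast
  have two: "(2::'a) \<noteq> 0" by simp
  show ?thesis
  proof (cases "A j k = 0")
    case True
    have "A i j = A i k" using e2 True two a b unfolding KC2_def by algebra
    then show ?thesis by simp
  next
    case False
    have c1: "(A j k)^2 = (A i k)^2" using e1 False two b unfolding KC1_def by algebra
    have c2: "(A i j)^2 = (A j k)^2" using e3 akj False two a unfolding KC1_def by algebra
    show ?thesis using c1 c2 by simp
  qed
qed

theorem mainTheorem7:
  fixes A :: "'n::finite \<Rightarrow> 'n \<Rightarrow> 'a::real_normed_field"
  assumes "skew_symmetric A"
    and "connected_graph A"
    and "kahan_poisson A"
  shows "\<exists>\<gamma>. \<gamma> \<noteq> 0 \<and> (\<forall>i j. A i j \<noteq> 0 \<longrightarrow> A i j = \<gamma> \<or> A i j = - \<gamma>)"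
proof (cases "\<forall>u v. A u v = 0")
  case True
  then show ?thesis by (intro exI[of _ 1]) auto
next
  case False
  then obtain u0 v0 where uv: "A u0 v0 \<noteq> 0" by blast
  define g where "g = A u0 v0"
  define good where "good w \<longleftrightarrow> (\<forall>z. A w z \<noteq> 0 \<longrightarrow> (A w z)^2 = g^2)" for w
  have g0: "good u0" unfolding good_def g_def using adj[OF assms(1) assms(3) uv] by metis
  have stp: "good w'" if gw: "good w" and e: "(w, w') \<in> arcs A \<union> (arcs A)\<inverse>" for w w'
  proof -
    have anti: "A w' w = - A w w'" using assms(1) unfolding skew_symmetric_def by blast
    have nz: "A w w' \<noteq> 0" using e anti by (auto simp: arcs_def)
    have nz': "A w' w \<noteq> 0" using nz anti by simp
    have sq: "(A w' w)^2 = g^2" using gw nz anti unfolding good_def by simp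
    show ?thesis unfolding good_def
    proof (intro allI impI)
      fix z assume "A w' z \<noteq> 0"
      then have "(A w' w)^2 = (A w' z)^2" by (rule adj[OF assms(1) assms(3) nz'])
      then show "(A w' z)^2 = g^2" using sq by simp
    qed
  qed
  have all: "good w" for w
  proof -
    have "(u0, w) \<in> (arcs A \<union> (arcs A)\<inverse>)\<^sup>*" using assms(2) unfolding connected_graph_def by blast
    then show ?thesis
    proof (induction rule: rtrancl_induct)
      case base then show ?case by (rule g0)
    next
      case (step y z) then show ?case using stp by blast
    qed
  qed
  show ?thesis
  proof (intro exI[of _ g] conjI allI impI)
    show "g \<noteq> 0" using uv by (simp add: g_def)
    fix p q assume "A p q \<noteq> 0"
    then have "(A p q)^2 = g^2" using all[of p] unfolding good_def by blast
    then show "A p q = g \<or> A p q = - g" by (simp add: power2_eq_iff)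
  qed
qed
end
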